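(* Let $a,b\ge1$ be coprime integers with $a\le b$, write $P_{a/b}(u,v,w)=\sum_{i,j} A_{ij}\,u^iv^jw^{a+b-1-i-j}$, and let $\Delta_{a/b}=\operatorname{Conv}\{(i,j)\in\mathbb{Z}^2: A_{ij}\neq 0\}\subset\mathbb{R}^2$. Then $$\Delta_{a/b}=\Big\{(i,j)\in\mathbb{R}^2:\ i\ge 0,\ j\ge 0,\ \frac{i}{a}+\frac{j}{b}\ge 1,\ i+j\le a+b-1\Big\}.$$
   Context: Markov polynomials. Let $x,y,z$ be indeterminates. Consider the set consisting of all rationals $\rho\in[0,1]$, each written in lowest terms $\rho=a/b$ with integers $a\ge 0$, $b\ge 1$, together with the formal symbol $1/0$. Define Laurent polynomials $M_\rho(x,y,z)$ recursively by $M_{1/0}=y$, $M_{0/1}=x$, $M_{1/1}=\frac{x^2+y^2}{z}$, and: whenever $a/b$, $c/d$ are in this set with $|ad-bc|=1$ and $(a+2c)/(b+2d)\in[0,1]$, then $M_{\frac{a+2c}{b+2d}}=\big(M_{c/d}^2+M_{\frac{a+c}{b+d}}^2\big)/M_{a/b}$. This determines $M_\rho$ for every rational $\rho\in[0,1]$. Numerator. For coprime $1\le a\le b$, $P_{a/b}(u,v,w)$ denotes the homogeneous polynomial of degree $a+b-1$ (with non-negative integer coefficients) such that $M_{a/b}(x,y,z)=P_{a/b}(x^2,y^2,z^2)/(x^{a-1}y^{b-1}z^{a+b-1})$; its existence is known. *)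

theory Defs
  imports "HOL-Analysis.Analysis"
begin

text \<open>Rationals in [0,1] in lowest terms a/b (b >= 1), together with the symbol 1/0,
  represented as pairs of naturals (a,b).\<close>
definition markov_frac :: "nat \<Rightarrow> nat \<Rightarrow> bool" where
  "markov_frac a b \<longleftrightarrow> coprime a b \<and> (a \<le> b \<or> b = 0)"

text \<open>The Markov Laurent polynomials, evaluated at positive reals x y z
  (a Laurent polynomial is determined by its values there).
  markov_rel x y z a b v  means  M_{a/b}(x,y,z) = v, following the recursive definition.\<close>
inductive markov_rel :: "real \<Rightarrow> real \<Rightarrow> real \<Rightarrow> nat \<Rightarrow> nat \<Rightarrow> real \<Rightarrow> bool"
  for x y z :: real where
  base_inf: "markov_rel x y z 1 0 y"
| base_0: "markov_rel x y z 0 1 x"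
| base_1: "markov_rel x y z 1 1 ((x\<^sup>2 + y\<^sup>2) / z)"
| step: "\<lbrakk> markov_frac a b; markov_frac c d;
           \<bar>int a * int d - int b * int c\<bar> = 1;
           a + 2 * c \<le> b + 2 * d;
           markov_rel x y z a b v1; markov_rel x y z c d v2;
           markov_rel x y z (a + c) (b + d) v3 \<rbrakk>
         \<Longrightarrow> markov_rel x y z (a + 2 * c) (b + 2 * d) ((v2\<^sup>2 + v3\<^sup>2) / v1)"

definition markov :: "nat \<Rightarrow> nat \<Rightarrow> real \<Rightarrow> real \<Rightarrow> real \<Rightarrow> real" where
  "markov a b x y z = (THE v. markov_rel x y z a b v)"

definition markov_numerator_coeffs :: "nat \<Rightarrow> nat \<Rightarrow> (nat \<Rightarrow> nat \<Rightarrow> int) \<Rightarrow> bool" where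
  "markov_numerator_coeffs a b A \<longleftrightarrow>
     (\<forall>i j. A i j \<noteq> 0 \<longrightarrow> i + j \<le> a + b - 1) \<and>
     (\<forall>x y z :: real. x > 0 \<longrightarrow> y > 0 \<longrightarrow> z > 0 \<longrightarrow>
        markov a b x y z =
          (\<Sum>(i, j) \<in> {(i, j). i + j \<le> a + b - 1}.
              of_int (A i j) * (x\<^sup>2) ^ i * (y\<^sup>2) ^ j * (z\<^sup>2) ^ (a + b - 1 - i - j))
          / (x ^ (a - 1) * y ^ (b - 1) * z ^ (a + b - 1)))"

definition newton_polygon :: "(nat \<Rightarrow> nat \<Rightarrow> int) \<Rightarrow> (real \<times> real) set" where
  "newton_polygon A = convex hull {(real i, real j) | i j. A i j \<noteq> 0}"

end

theory Submission
  imports Defs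
begin

lemma mf00: "\<not> markov_frac 0 0" by (simp add: markov_frac_def)

lemma small_dvd0:
  fixes f k :: int
  assumes "f dvd k" "\<bar>k\<bar> < f" shows "k = 0"
proof (rule ccontr)
  assume "k \<noteq> 0"
  then have "\<bar>f\<bar> \<le> \<bar>k\<bar>" using assms(1) by (rule dvd_imp_le_int)
  then show False using assms(2) by linarith
qed

lemma decomp_unique:
  assumes m1: "markov_frac a b" and m2: "markov_frac c d"
    and s1: "\<bar>int a*int d - int b*int c\<bar> = 1"
    and m1': "markov_frac a' b'" and m2': "markov_frac c' d'"
    and s1': "\<bar>int a'*int d' - int b'*int c'\<bar> = 1"
    and e: "a+2*c = a'+2*c'" and f: "b+2*d = b'+2*d'"
  shows "a=a' \<and> b=b' \<and> c=c' \<and> d=d'"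
proof -
  define E where "E = int a + 2*int c"
  define F where "F = int b + 2*int d"
  have a': "int a' = E - 2*int c'" using e unfolding E_def by linarith
  have b': "int b' = F - 2*int d'" using f unfolding F_def by linarith
  have k1: "int c * F - int d * E = - (int a*int d - int b*int c)"
    unfolding E_def F_def by (simp add: algebra_simps)
  have k2: "int c' * F - int d' * E = - (int a'*int d' - int b'*int c')"
    unfolding a' b' by (simp add: algebra_simps)
  have Fpos: "F \<ge> 1"
  proof (rule ccontr)
    assume "\<not> F \<ge> 1"
    then have "b = 0" "d = 0" unfolding F_def by auto
    then show False using s1 by simp
  qed
  have cop: "coprime F E"
  proof -
    have "gcd F E dvd int c * F - int d * E" by simp
    then have "gcd F E dvd \<bar>int c * F - int d * E\<bar>" by simp
    moreover have "\<bar>int c * F - int d * E\<bar> = 1" using k1 s1 by simp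
    ultimately have "gcd F E dvd 1" by simp
    then show ?thesis by (simp add: coprime_iff_gcd_eq_1 is_unit_gcd)
  qed
  have d1: "2*int d \<le> F" "2*int d' \<le> F" "0 \<le> int d" "0 \<le> int d'"
    using b' unfolding F_def by auto
  have c1: "2*int c \<le> E" "2*int c' \<le> E"
    using a' unfolding E_def by auto
  have ss: "(int a*int d - int b*int c) = (int a'*int d' - int b'*int c') \<or>
            (int a*int d - int b*int c) = - (int a'*int d' - int b'*int c')"
    using s1 s1' by linarith
  then show ?thesis
  proof
    assume eq: "(int a*int d - int b*int c) = (int a'*int d' - int b'*int c')"
    have "(int c - int c') * F = (int d - int d') * E" using k1 k2 eq by (simp add: algebra_simps)
    then have "F dvd (int d - int d') * E" by (metis dvd_triv_right)
    then have "F dvd (int d - int d')" using cop by (simp add: coprime_dvd_mult_left_iff)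
    moreover have "\<bar>int d - int d'\<bar> < F" using d1 Fpos by linarith
    ultimately have "int d - int d' = 0" by (rule small_dvd0)
    then have dd: "d = d'" by simp
    with \<open>(int c - int c') * F = (int d - int d') * E\<close> Fpos have "c = c'" by simp
    with dd e f show ?thesis by simp
  next
    assume eq: "(int a*int d - int b*int c) = - (int a'*int d' - int b'*int c')"
    have h: "(int c + int c') * F = (int d + int d') * E" using k1 k2 eq by (simp add: algebra_simps)
    then have "F dvd (int d + int d') * E" by (metis dvd_triv_right)
    then have "F dvd (int d + int d')" using cop by (simp add: coprime_dvd_mult_left_iff)
    then obtain k where k: "int d + int d' = F * k" by (auto elim: dvdE)
    have "F * k \<le> F" "0 \<le> F * k" using d1 k by linarith+
    have "k \<le> 1"
    proof (rule ccontr)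
      assume "\<not> k \<le> 1"
      then have "k \<ge> 2" by linarith
      then have "F * 2 \<le> F * k" using Fpos by (intro mult_left_mono) auto
      then show False using \<open>F * k \<le> F\<close> Fpos by linarith
    qed
    moreover have "k \<ge> 0" using \<open>0 \<le> F * k\<close> Fpos by (simp add: zero_le_mult_iff)
    ultimately have "k = 0 \<or> k = 1" by linarith
    then show ?thesis
    proof
      assume "k = 0"
      then have "d = 0" "d' = 0" using k by auto
      then have "(int c + int c') * F = 0" using h by simp
      then have "c = 0" using Fpos by simp
      then show ?thesis using m2 \<open>d = 0\<close> mf00 by simp
    next
      assume "k = 1"
      then have "int d + int d' = F" using k by simp
      then have "2 * int d = F" using d1 by linarith
      then have "b = 0" unfolding F_def by simp
      have "(int c + int c') * F = F * E" using h k \<open>k = 1\<close> by simp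
      then have "int c + int c' = E" using Fpos by (simp add: mult.commute)
      then have "a = 0" using c1 unfolding E_def by linarith
      then show ?thesis using m1 \<open>b = 0\<close> mf00 by simp
    qed
  qed
qed

lemma step_not_base:
  assumes "markov_frac a b" "markov_frac c d"
  shows "\<not> (a+2*c = 1 \<and> b+2*d = 0)" "\<not> (a+2*c = 0 \<and> b+2*d = 1)" "\<not> (a+2*c = 1 \<and> b+2*d = 1)"
proof -
  have h: "\<not> (c = 0 \<and> d = 0)" using assms(2) mf00 by blast
  show "\<not> (a+2*c = 1 \<and> b+2*d = 0)" using h by presburger
  show "\<not> (a+2*c = 0 \<and> b+2*d = 1)" using h by presburger
  show "\<not> (a+2*c = 1 \<and> b+2*d = 1)" using h by presburger
qed

lemma markov_rel_inv:
  assumes "markov_rel x y z p q v"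
  shows "(p = 1 \<and> q = 0 \<and> v = y) \<or> (p = 0 \<and> q = 1 \<and> v = x) \<or>
         (p = 1 \<and> q = 1 \<and> v = (x\<^sup>2 + y\<^sup>2) / z) \<or>
         (\<exists>a b c d v1 v2 v3. p = a + 2*c \<and> q = b + 2*d \<and> v = (v2\<^sup>2 + v3\<^sup>2) / v1 \<and>
            markov_frac a b \<and> markov_frac c d \<and> \<bar>int a*int d - int b*int c\<bar> = 1 \<and>
            a + 2*c \<le> b + 2*d \<and> markov_rel x y z a b v1 \<and> markov_rel x y z c d v2 \<and>
            markov_rel x y z (a+c) (b+d) v3)"
  using assms by (cases rule: markov_rel.cases) blast+

lemma markov_rel_fun:
  assumes "markov_rel x y z p q v" "markov_rel x y z p q w"
  shows "v = w"
  using assms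
proof (induction arbitrary: w rule: markov_rel.induct)
  case base_inf
  from markov_rel_inv[OF this] step_not_base show ?case by (elim disjE exE conjE) (linarith|metis)+
next
  case base_0
  from markov_rel_inv[OF this] step_not_base show ?case by (elim disjE exE conjE) (linarith|metis)+
next
  case base_1
  from markov_rel_inv[OF this] step_not_base show ?case by (elim disjE exE conjE) (linarith|metis)+
next
  case (step a b c d v1 v2 v3)
  note H = step.hyps and IH = step.IH
  from markov_rel_inv[OF step.prems] show ?case
  proof (elim disjE exE conjE)
    fix a' b' c' d' w1 w2 w3
    assume A: "a + 2 * c = a' + 2 * c'" "b + 2 * d = b' + 2 * d'" "w = (w2\<^sup>2 + w3\<^sup>2) / w1"
      "markov_frac a' b'" "markov_frac c' d'" "\<bar>int a' * int d' - int b' * int c'\<bar> = 1"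
      "a' + 2 * c' \<le> b' + 2 * d'" "markov_rel x y z a' b' w1" "markov_rel x y z c' d' w2"
      "markov_rel x y z (a' + c') (b' + d') w3"
    have u: "a=a' \<and> b=b' \<and> c=c' \<and> d=d'"
      by (rule decomp_unique[OF H(1,2,3) A(4,5,6) A(1,2)])
    then have "v1 = w1" "v2 = w2" "v3 = w3" using IH A(8,9,10) by auto
    then show ?thesis using A(3) by blast
  next
    assume "a + 2 * c = 1" "b + 2 * d = 0" then show ?thesis using step_not_base(1)[OF H(1,2)] by blast
  next
    assume "a + 2 * c = 0" "b + 2 * d = 1" then show ?thesis using step_not_base(2)[OF H(1,2)] by blast
  next
    assume "a + 2 * c = 1" "b + 2 * d = 1" then show ?thesis using step_not_base(3)[OF H(1,2)] by blast
  qed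
qed

lemma coprime_from_det:
  fixes a b :: nat
  assumes "\<bar>int a * D - int b * C\<bar> = 1"
  shows "coprime a b"
proof -
  have "gcd (int a) (int b) dvd int a * D - int b * C" by simp
  then have "gcd (int a) (int b) dvd \<bar>int a * D - int b * C\<bar>" by simp
  then have "gcd (int a) (int b) dvd 1" using assms by simp
  then have "coprime (int a) (int b)" by (simp add: coprime_iff_gcd_eq_1 is_unit_gcd)
  then show ?thesis by simp
qed

lemma bez_half:
  fixes E F :: int
  assumes "coprime E F" "F \<ge> 1"
  shows "\<exists>C D. \<bar>C * F - D * E\<bar> = 1 \<and> 0 \<le> 2*D \<and> 2*D \<le> F"
proof -
  obtain u v where uv: "u * E + v * F = 1" using bezout_int[of E F] assms(1)
    by (auto simp: coprime_iff_gcd_eq_1)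
  define D1 where "D1 = (- u) mod F"
  have D1r: "0 \<le> D1" "D1 < F" unfolding D1_def using assms by auto
  have "D1 = -u - F * ((-u) div F)" unfolding D1_def by (simp add: minus_div_mult_eq_mod [symmetric])
  then obtain k where k: "D1 = -u + F * k" by (metis add.commute diff_conv_add_uminus mult_minus_right)
  define C1 where "C1 = v + E * k"
  have e1: "C1 * F - D1 * E = 1" unfolding C1_def k using uv by (simp add: algebra_simps)
  show ?thesis
  proof (cases "2 * D1 \<le> F")
    case True
    then show ?thesis using e1 D1r by (intro exI[of _ C1] exI[of _ D1]) auto
  next
    case False
    have "(E - C1) * F - (F - D1) * E = -1" using e1 by (simp add: algebra_simps)
    then show ?thesis using False D1r by (intro exI[of _ "E - C1"] exI[of _ "F - D1"]) auto
  qed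
qed

lemma decomp_exists:
  assumes cop: "coprime e f" and ef: "e \<le> f" and f2: "f \<ge> 2"
  shows "\<exists>a b c d. markov_frac a b \<and> markov_frac c d \<and> \<bar>int a*int d - int b*int c\<bar> = 1 \<and>
            a + 2*c \<le> b + 2*d \<and> e = a + 2*c \<and> f = b + 2*d \<and> 1 \<le> d \<and> 2*d \<le> f"
proof (cases "f = 2")
  case True
  have "e = 0 \<or> e = 1 \<or> e = 2" using ef True by linarith
  moreover have "e \<noteq> 0" using cop True by (intro notI) simp
  moreover have "e \<noteq> 2" using cop True by (intro notI) simp
  ultimately have e1: "e = 1" by blast
  have "markov_frac 1 0" "markov_frac 0 1" unfolding markov_frac_def by simp_all
  then show ?thesis unfolding e1 True
    by (intro exI[of _ 1] exI[of _ 0] exI[of _ 0] exI[of _ 1]) simp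
next
  case False
  then have f3: "f \<ge> 3" using f2 by linarith
  define E where "E = int e"
  define F where "F = int f"
  have F3: "F \<ge> 3" and EF: "E \<le> F" and E0: "E \<ge> 0" using f3 ef unfolding E_def F_def by auto
  have "coprime E F" unfolding E_def F_def using cop by simp
  then obtain C D where CD: "\<bar>C * F - D * E\<bar> = 1" "0 \<le> 2*D" "2*D \<le> F"
    using bez_half F3 by (metis dual_order.trans one_le_numeral)
  define s where "s = C * F - D * E"
  have s: "s = 1 \<or> s = -1" using CD unfolding s_def by linarith
  have D1: "D \<ge> 1"
  proof (rule ccontr)
    assume "\<not> D \<ge> 1"
    then have "D = 0" using CD by linarith
    then have "\<bar>C * F\<bar> = 1" using CD by simp
    then have "\<bar>C\<bar> * F = 1" using F3 by (simp add: abs_mult)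
    moreover have "\<bar>C\<bar> \<ge> 1" using \<open>\<bar>C\<bar> * F = 1\<close> by (cases "C = 0") auto
    ultimately show False using F3
      by (smt (verit, best) mult_le_cancel_right1)
  qed
  have D2: "2 * D < F"
  proof (rule ccontr)
    assume "\<not> 2 * D < F"
    then have "F = 2 * D" using CD by linarith
    then have "\<bar>D * (2 * C - E)\<bar> = 1" using CD by (simp add: algebra_simps)
    then have "\<bar>D\<bar> * \<bar>2 * C - E\<bar> = 1" by (simp add: abs_mult)
    moreover have "\<bar>2 * C - E\<bar> \<ge> 1" using calculation by (cases "2 * C - E = 0") auto
    ultimately have "D \<le> 1" using D1
      by (smt (verit, best) mult_le_cancel_left1)
    then show False using \<open>F = 2 * D\<close> F3 by linarith
  qed
  have C0: "C \<ge> 0"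
  proof (rule ccontr)
    assume "\<not> C \<ge> 0"
    then have "C * F \<le> -1 * F" using F3 by (intro mult_right_mono) auto
    moreover have "D * E \<ge> 0" using D1 E0 by simp
    ultimately show False using CD F3 by linarith
  qed
  have C2: "2 * C \<le> E"
  proof (rule ccontr)
    assume "\<not> 2 * C \<le> E"
    then have "2 * C * F \<ge> (E + 1) * F" using F3 by (intro mult_right_mono) auto
    moreover have "2 * D * E \<le> (F - 1) * E" using D2 E0 by (intro mult_right_mono) auto
    moreover have "2 * C * F = 2 * D * E + 2 * s" unfolding s_def by simp
    ultimately show False using s F3 E0 by (simp add: algebra_simps)
  qed
  have CleD: "C \<le> D"
  proof (rule ccontr)
    assume "\<not> C \<le> D"
    then have "C * F \<ge> (D + 1) * F" using F3 by (intro mult_right_mono) auto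
    moreover have "D * E \<le> D * F" using D1 EF by (intro mult_left_mono) auto
    moreover have "C * F = D * E + s" unfolding s_def by simp
    ultimately show False using s F3 by (simp add: algebra_simps)
  qed
  define c where "c = nat C"
  define d where "d = nat D"
  have cC: "int c = C" and dD: "int d = D" unfolding c_def d_def using C0 D1 by auto
  define a where "a = e - 2 * c"
  define b where "b = f - 2 * d"
  have aA: "int a = E - 2 * C" unfolding a_def E_def using C2 cC E_def by linarith
  have bB: "int b = F - 2 * D" unfolding b_def F_def using D2 dD F_def by linarith
  have det: "int a * int d - int b * int c = - s" unfolding aA bB cC dD s_def by (simp add: algebra_simps)
  then have det1: "\<bar>int a * int d - int b * int c\<bar> = 1" using s by auto
  have b1: "b \<ge> 1" using bB D2 by linarith
  have cop_cd: "coprime c d"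
  proof -
    have "\<bar>int c * F - int d * E\<bar> = 1" using CD cC dD by simp
    then have "\<bar>int d * (-E) - int c * (-F)\<bar> = 1" by (simp add: algebra_simps abs_minus_commute)
    then show ?thesis using coprime_from_det[of d "-E" c "-F"] by (simp add: ac_simps)
  qed
  have mcd: "markov_frac c d" unfolding markov_frac_def using cop_cd CleD cC dD by auto
  have cop_ab: "coprime a b" using coprime_from_det[of a "int d" b "int c"] det1 by simp
  have ab: "a \<le> b"
  proof (rule ccontr)
    assume "\<not> a \<le> b"
    then have A1: "int a \<ge> int b + 1" by linarith
    have "int a * D \<ge> (int b + 1) * D" using A1 D1 by (intro mult_right_mono) auto
    moreover have "int b * C \<le> int b * D" using CleD by (intro mult_left_mono) auto
    ultimately have "int a * D - int b * C \<ge> D" by (simp add: algebra_simps)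
    moreover have "\<bar>int a * D - int b * C\<bar> = 1" using det1 dD cC by simp
    ultimately have "D \<le> 1" by linarith
    then have Deq: "D = 1" using D1 by linarith
    have "int a * D - int b * C \<ge> (int b + 1) * D - int b * C"
      using \<open>int a * D \<ge> (int b + 1) * D\<close> by linarith
    then have "int b * (1 - C) \<le> 0" using \<open>\<bar>int a * D - int b * C\<bar> = 1\<close> Deq by (simp add: algebra_simps)
    moreover have "C = 0 \<or> C = 1" using C0 CleD Deq by linarith
    ultimately have "C = 1" using b1 by auto
    then have "E = int a + 2" "F = int b + 2" using aA bB Deq by linarith+
    then show False using EF A1 by linarith
  qed
  have mab: "markov_frac a b" unfolding markov_frac_def using cop_ab ab by auto
  have q1: "e = a + 2*c" using aA cC C2 unfolding E_def by linarith
  have q2: "f = b + 2*d" using bB dD D2 unfolding F_def by linarith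
  have q3: "1 \<le> d" using dD D1 by linarith
  have q4: "2*d \<le> f" using dD D2 unfolding F_def by linarith
  have q5: "a + 2*c \<le> b + 2*d" using q1 q2 ef by linarith
  show ?thesis using mab mcd det1 q1 q2 q3 q4 q5 by blast
qed

lemma mid_frac:
  assumes m1: "markov_frac a b" and m2: "markov_frac c d"
    and s1: "\<bar>int a*int d - int b*int c\<bar> = 1" and le: "a+2*c \<le> b+2*d"
  shows "markov_frac (a+c) (b+d)"
proof -
  have "\<bar>int (a+c) * int d - int (b+d) * int c\<bar> = 1" using s1 by (simp add: algebra_simps)
  then have cop: "coprime (a+c) (b+d)" by (rule coprime_from_det)
  have "a + c \<le> b + d"
  proof (cases "b = 0")
    case True
    then have "a = 1" using m1 by (simp add: markov_frac_def)
    then have "d = 1" using s1 True by simp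
    then show ?thesis using le True \<open>a = 1\<close> by linarith
  next
    case False
    show ?thesis
    proof (cases "d = 0")
      case True
      then have "c = 1" using m2 by (simp add: markov_frac_def)
      then have "b = 1" using s1 True by simp
      then show ?thesis using le True \<open>c = 1\<close> by linarith
    next
      case False
      then have "c \<le> d" using m2 by (simp add: markov_frac_def)
      moreover have "a \<le> b" using m1 \<open>b \<noteq> 0\<close> by (simp add: markov_frac_def)
      ultimately show ?thesis by linarith
    qed
  qed
  then show ?thesis using cop by (simp add: markov_frac_def)
qed

lemma markov_exists: "markov_frac p q \<Longrightarrow> \<exists>v. markov_rel x y z p q v"
proof (induction q arbitrary: p rule: less_induct)
  case (less q)
  show ?case
  proof (cases "q \<ge> 2")
    case True
    have cop: "coprime p q" and pq: "p \<le> q" using less.prems True by (auto simp: markov_frac_def)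
    obtain a b c d where D: "markov_frac a b" "markov_frac c d" "\<bar>int a*int d - int b*int c\<bar> = 1"
      "a + 2*c \<le> b + 2*d" "p = a + 2*c" "q = b + 2*d" "1 \<le> d" "2*d \<le> q"
      using decomp_exists[OF cop pq True] by blast
    obtain v1 where "markov_rel x y z a b v1" using less.IH[of b a] D by auto
    moreover obtain v2 where "markov_rel x y z c d v2" using less.IH[of d c] D by auto
    moreover obtain v3 where "markov_rel x y z (a+c) (b+d) v3"
      using less.IH[of "b+d" "a+c"] D mid_frac[OF D(1-4)] by auto
    ultimately have "markov_rel x y z (a + 2 * c) (b + 2 * d) ((v2\<^sup>2 + v3\<^sup>2) / v1)"
      using D by (intro markov_rel.step) auto
    then show ?thesis using D by auto
  next
    case False
    then have "q = 0 \<or> q = 1" by linarith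
    then show ?thesis
    proof
      assume "q = 0"
      then have "p = 1" using less.prems by (simp add: markov_frac_def)
      then show ?thesis using \<open>q = 0\<close> markov_rel.base_inf by blast
    next
      assume "q = 1"
      then have "p = 0 \<or> p = 1" using less.prems by (auto simp: markov_frac_def)
      then show ?thesis using \<open>q = 1\<close> markov_rel.base_0 markov_rel.base_1 by blast
    qed
  qed
qed

lemma markov_rel_markov: "markov_frac p q \<Longrightarrow> markov_rel x y z p q (markov p q x y z)"
  unfolding markov_def using markov_exists markov_rel_fun by (metis theI)

lemma markov_eqI: "markov_rel x y z p q v \<Longrightarrow> markov p q x y z = v"
  unfolding markov_def using markov_rel_fun by blast

lemma markov_10: "markov 1 0 x y z = y" by (rule markov_eqI) (rule markov_rel.base_inf)
lemma markov_01: "markov 0 1 x y z = x" by (rule markov_eqI) (rule markov_rel.base_0)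
lemma markov_11: "markov 1 1 x y z = (x\<^sup>2 + y\<^sup>2) / z" by (rule markov_eqI) (rule markov_rel.base_1)

lemma markov_step:
  assumes "markov_frac a b" "markov_frac c d" "\<bar>int a*int d - int b*int c\<bar> = 1" "a+2*c \<le> b+2*d"
  shows "markov (a+2*c) (b+2*d) x y z =
     ((markov c d x y z)\<^sup>2 + (markov (a+c) (b+d) x y z)\<^sup>2) / markov a b x y z"
  by (rule markov_eqI, rule markov_rel.step) (use assms mid_frac[OF assms] markov_rel_markov in auto)

lemma markov_rel_pos: "markov_rel x y z p q v \<Longrightarrow> x > 0 \<Longrightarrow> y > 0 \<Longrightarrow> z > 0 \<Longrightarrow> v > 0"
  by (induction rule: markov_rel.induct) (auto intro!: divide_pos_pos add_pos_pos)

lemma markov_pos: "markov_frac p q \<Longrightarrow> x > 0 \<Longrightarrow> y > 0 \<Longrightarrow> z > 0 \<Longrightarrow> markov p q x y z > 0"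
  using markov_rel_pos markov_rel_markov by blast

lemma markov_rel_hom:
  "markov_rel x y z p q v \<Longrightarrow> z \<noteq> 0 \<Longrightarrow> markov_rel (x/z) (y/z) 1 p q (v/z)"
proof (induction rule: markov_rel.induct)
  case base_inf show ?case by (rule markov_rel.base_inf)
next
  case base_0 show ?case by (rule markov_rel.base_0)
next
  case base_1
  have "(x\<^sup>2 + y\<^sup>2) / z / z = ((x/z)\<^sup>2 + (y/z)\<^sup>2) / 1"
    using base_1 by (simp add: field_simps power2_eq_square)
  then show ?case using markov_rel.base_1[of "x/z" "y/z" 1] by simp
next
  case (step a b c d v1 v2 v3)
  have e: "(v2\<^sup>2 + v3\<^sup>2) / v1 / z = ((v2/z)\<^sup>2 + (v3/z)\<^sup>2) / (v1/z)"
    using step.prems by (cases "v1 = 0") (simp_all add: field_simps power2_eq_square)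
  show ?case unfolding e by (rule markov_rel.step) (use step in auto)
qed

lemma markov_hom:
  assumes "markov_frac p q" "z \<noteq> 0"
  shows "markov p q x y z = z * markov p q (x/z) (y/z) 1"
proof -
  have "markov p q (x/z) (y/z) 1 = markov p q x y z / z"
    by (rule markov_eqI, rule markov_rel_hom) (use assms markov_rel_markov in auto)
  then show ?thesis using assms by simp
qed

definition KK :: "real \<Rightarrow> real \<Rightarrow> real" where "KK x y = (x\<^sup>2 + y\<^sup>2 + 1) / (x * y)"

definition INV :: "real \<Rightarrow> real \<Rightarrow> nat \<Rightarrow> nat \<Rightarrow> nat \<Rightarrow> nat \<Rightarrow> bool" where
  "INV x y p q r s \<longleftrightarrow>
    (markov p q x y 1)\<^sup>2 + (markov r s x y 1)\<^sup>2 + (markov (p+r) (q+s) x y 1)\<^sup>2 =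
      KK x y * markov p q x y 1 * markov r s x y 1 * markov (p+r) (q+s) x y 1"

lemma INV_sym: "INV x y p q r s \<longleftrightarrow> INV x y r s p q"
  unfolding INV_def by (simp add: add.commute mult.commute mult.left_commute)

lemma nodom:
  assumes "markov_frac p q" "markov_frac r s" "\<bar>int p*int s - int q*int r\<bar> = 1" "p < r" "s < q"
  shows "p = 0 \<and> q = 1 \<and> r = 1 \<and> s = 0"
proof -
  have "int q * int r \<ge> int q * (int p + 1)" using assms(4) by (intro mult_left_mono) auto
  moreover have "int p * int s \<le> int p * int q" using assms(5) by (intro mult_left_mono) auto
  ultimately have h: "int q * int r - int p * int s \<ge> int q" by (simp add: algebra_simps)
  have "q \<ge> 1" using assms(5) by linarith
  then have "int q * int r - int p * int s = 1" using h assms(3) by linarith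
  then have q1: "q = 1" using h \<open>q \<ge> 1\<close> by linarith
  then have s0: "s = 0" using assms(5) by linarith
  then have "r = 1" using assms(2) by (simp add: markov_frac_def)
  then have "p = 0" using assms(4) by linarith
  then show ?thesis using q1 s0 \<open>r = 1\<close> by simp
qed

lemma dom_frac:
  assumes m1: "markov_frac p q" and m2: "markov_frac r s" and det: "\<bar>int p*int s - int q*int r\<bar> = 1"
    and rp: "r \<le> p" and sq: "s \<le> q"
  shows "markov_frac (p-r) (q-s)" "p \<le> q" "r + s \<ge> 1"
    "\<bar>int (p-r)*int s - int (q-s)*int r\<bar> = 1"
proof -
  show det2: "\<bar>int (p-r)*int s - int (q-s)*int r\<bar> = 1" using det rp sq by (simp add: of_nat_diff algebra_simps)
  show "r + s \<ge> 1" using m2 mf00 by (cases "r + s = 0") auto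
  show pq: "p \<le> q"
  proof (rule ccontr)
    assume "\<not> p \<le> q"
    then have "q = 0" using m1 by (auto simp: markov_frac_def)
    then have "p = 1" using m1 by (simp add: markov_frac_def)
    have "s = 0" using sq \<open>q = 0\<close> by simp
    then have "r = 1" using m2 by (simp add: markov_frac_def)
    then show False using det \<open>s = 0\<close> \<open>q = 0\<close> by simp
  qed
  have cop: "coprime (p-r) (q-s)" using coprime_from_det[OF det2] .
  have "p - r \<le> q - s \<or> q - s = 0"
  proof (rule ccontr)
    assume H: "\<not> (p - r \<le> q - s \<or> q - s = 0)"
    define A where "A = int p - int r"
    define B where "B = int q - int s"
    have A1: "A \<ge> B + 1" and B1: "B \<ge> 1" using H rp sq unfolding A_def B_def by auto
    have dA: "\<bar>A * int s - B * int r\<bar> = 1" using det unfolding A_def B_def by (simp add: algebra_simps)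
    show False
    proof (cases "s = 0")
      case True
      then have "r = 1" using m2 by (simp add: markov_frac_def)
      then show False using A1 pq unfolding A_def B_def using True by linarith
    next
      case False
      then have rs: "r \<le> s" using m2 by (simp add: markov_frac_def)
      have "A * int s \<ge> (B + 1) * int s" using A1 by (intro mult_right_mono) auto
      moreover have "B * int r \<le> B * int s" using rs B1 by (intro mult_left_mono) auto
      ultimately have "A * int s - B * int r \<ge> B * (int s - int r) + int s" by (simp add: algebra_simps)
      moreover have "B * (int s - int r) \<ge> 0" using rs B1 by simp
      ultimately have "int s \<le> 1" "B * (int s - int r) \<le> 1 - int s" using dA by linarith+
      then have "s = 1" using False by linarith
      then have "B * (1 - int r) \<le> 0" using \<open>B * (int s - int r) \<le> 1 - int s\<close> by simp
      then have "1 - int r \<le> 0" using B1 by (simp add: mult_le_0_iff)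
      then have "r \<ge> 1" by linarith
      then have "r = 1" using rs \<open>s = 1\<close> by linarith
      then show False using A1 pq \<open>s = 1\<close> unfolding A_def B_def by linarith
    qed
  qed
  then show "markov_frac (p-r) (q-s)" using cop by (auto simp: markov_frac_def)
qed

lemma inv_step:
  assumes x: "x > 0" and y: "y > 0"
    and m1: "markov_frac p q" and m2: "markov_frac r s" and det: "\<bar>int p*int s - int q*int r\<bar> = 1"
    and med: "p + r \<le> q + s" and rp: "r \<le> p" and sq: "s \<le> q"
    and IH: "INV x y (p-r) (q-s) r s"
  shows "INV x y p q r s"
proof -
  note D = dom_frac[OF m1 m2 det rp sq]
  have le: "(p - r) + 2 * r \<le> (q - s) + 2 * s" using med rp sq by linarith
  have e1: "(p - r) + 2 * r = p + r" "(q - s) + 2 * s = q + s" "(p - r) + r = p" "(q - s) + s = q"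
    using rp sq by auto
  have st: "markov (p + r) (q + s) x y 1 =
     ((markov r s x y 1)\<^sup>2 + (markov p q x y 1)\<^sup>2) / markov (p - r) (q - s) x y 1"
    using markov_step[OF D(1) m2 D(4) le, of x y 1] unfolding e1 .
  define \<alpha> where "\<alpha> = markov (p - r) (q - s) x y 1"
  define \<beta> where "\<beta> = markov r s x y 1"
  define \<gamma> where "\<gamma> = markov p q x y 1"
  define \<delta> where "\<delta> = markov (p+r) (q+s) x y 1"
  have ap: "\<alpha> > 0" unfolding \<alpha>_def using markov_pos[OF D(1) x y] by simp
  have dl: "\<delta> = (\<beta>\<^sup>2 + \<gamma>\<^sup>2) / \<alpha>" unfolding \<delta>_def \<alpha>_def \<beta>_def \<gamma>_def
    using st .
  have I: "\<alpha>\<^sup>2 + \<beta>\<^sup>2 + \<gamma>\<^sup>2 = KK x y * \<alpha> * \<beta> * \<gamma>"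
    using IH unfolding INV_def \<alpha>_def \<beta>_def \<gamma>_def e1 .
  have "\<delta> * \<alpha> = \<beta>\<^sup>2 + \<gamma>\<^sup>2" using dl ap by simp
  also have "\<beta>\<^sup>2 + \<gamma>\<^sup>2 = (KK x y * \<beta> * \<gamma> - \<alpha>) * \<alpha>"
    using I by (simp add: algebra_simps power2_eq_square)
  finally have dd: "\<delta> = KK x y * \<beta> * \<gamma> - \<alpha>" using ap by simp
  have "\<delta> * \<alpha> = \<beta>\<^sup>2 + \<gamma>\<^sup>2" using dl ap by simp
  then have "\<gamma>\<^sup>2 + \<beta>\<^sup>2 + \<delta>\<^sup>2 = KK x y * \<gamma> * \<beta> * \<delta>"
    unfolding dd by (simp add: algebra_simps power2_eq_square)
  then show ?thesis unfolding INV_def \<gamma>_def \<beta>_def \<delta>_def .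
qed

lemma INV_base:
  assumes "x > 0" "y > 0"
  shows "INV x y 0 1 1 0"
proof -
  have "x\<^sup>2 + y\<^sup>2 + ((x\<^sup>2 + y\<^sup>2) / 1)\<^sup>2 = KK x y * x * y * ((x\<^sup>2 + y\<^sup>2) / 1)"
    using assms unfolding KK_def by (simp add: field_simps power2_eq_square)
  then show ?thesis unfolding INV_def using markov_01 markov_10 markov_11 by simp
qed

lemma markov_inv_aux:
  assumes x: "x > 0" and y: "y > 0"
  shows "p + q + r + s = N \<Longrightarrow> markov_frac p q \<Longrightarrow> markov_frac r s \<Longrightarrow>
    \<bar>int p*int s - int q*int r\<bar> = 1 \<Longrightarrow> p + r \<le> q + s \<Longrightarrow> INV x y p q r s"
proof (induction N arbitrary: p q r s rule: less_induct)
  case (less N)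
  have dom: "INV x y p q r s"
    if h: "markov_frac p q" "markov_frac r s" "\<bar>int p*int s - int q*int r\<bar> = 1" "p + r \<le> q + s"
      "r \<le> p" "s \<le> q" "p + q + r + s = N" for p q r s
  proof -
    note D = dom_frac[OF h(1,2,3,5,6)]
    have "INV x y (p-r) (q-s) r s"
    proof (rule less.IH)
      show "(p - r) + (q - s) + r + s < N" using h D by linarith
      show "(p - r) + (q - s) + r + s = (p - r) + (q - s) + r + s" ..
      show "p - r + r \<le> q - s + s" using h D by linarith
    qed (use D h in auto)
    then show ?thesis by (rule inv_step[OF x y h(1-6)])
  qed
  show ?case
  proof (cases "r \<le> p \<and> s \<le> q")
    case True then show ?thesis using dom less.prems by blast
  next
    case F1: False
    show ?thesis
    proof (cases "p \<le> r \<and> q \<le> s")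
      case True
      have "\<bar>int r*int q - int s*int p\<bar> = 1" using less.prems(4) by (simp add: abs_minus_commute ac_simps)
      then have "INV x y r s p q" using dom[of r s p q] less.prems True by (simp add: ac_simps)
      then show ?thesis using INV_sym by blast
    next
      case F2: False
      have "(p < r \<and> s < q) \<or> (r < p \<and> q < s)" using F1 F2 by linarith
      then show ?thesis
      proof
        assume "p < r \<and> s < q"
        then have "p = 0 \<and> q = 1 \<and> r = 1 \<and> s = 0" using nodom less.prems by blast
        then show ?thesis using INV_base[OF x y] by simp
      next
        assume H: "r < p \<and> q < s"
        have "\<bar>int r*int q - int s*int p\<bar> = 1" using less.prems(4) by (simp add: abs_minus_commute ac_simps)
        then have "r = 0 \<and> s = 1 \<and> p = 1 \<and> q = 0" using nodom[of r s p q] less.prems H by blast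
        then show ?thesis using INV_base[OF x y] INV_sym by simp
      qed
    qed
  qed
qed

lemma markov_inv:
  assumes "x > 0" "y > 0" "markov_frac p q" "markov_frac r s"
    "\<bar>int p*int s - int q*int r\<bar> = 1" "p + r \<le> q + s"
  shows "INV x y p q r s"
  using markov_inv_aux[OF assms(1,2) refl assms(3-6)] .

lemma markov_vieta:
  assumes x: "x > 0" and y: "y > 0"
    and h: "markov_frac a b" "markov_frac c d" "\<bar>int a*int d - int b*int c\<bar> = 1" "a+2*c \<le> b+2*d"
  shows "markov (a + 2 * c) (b + 2 * d) x y 1 =
    KK x y * markov c d x y 1 * markov (a+c) (b+d) x y 1 - markov a b x y 1"
proof -
  have "b + d \<noteq> 0" using h(3) by (intro notI) simp
  then have "a + c \<le> b + d" using mid_frac[OF h] unfolding markov_frac_def by linarith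
  then have I: "INV x y a b c d" by (rule markov_inv[OF x y h(1-3)])
  define \<alpha> where "\<alpha> = markov a b x y 1"
  define \<beta> where "\<beta> = markov c d x y 1"
  define \<gamma> where "\<gamma> = markov (a+c) (b+d) x y 1"
  have ap: "\<alpha> > 0" unfolding \<alpha>_def using markov_pos[OF h(1) x y] by simp
  have I': "\<alpha>\<^sup>2 + \<beta>\<^sup>2 + \<gamma>\<^sup>2 = KK x y * \<alpha> * \<beta> * \<gamma>" using I unfolding INV_def \<alpha>_def \<beta>_def \<gamma>_def .
  have st: "markov (a + 2 * c) (b + 2 * d) x y 1 = (\<beta>\<^sup>2 + \<gamma>\<^sup>2) / \<alpha>"
    unfolding \<alpha>_def \<beta>_def \<gamma>_def by (rule markov_step[OF h])
  have "(\<beta>\<^sup>2 + \<gamma>\<^sup>2) = (KK x y * \<beta> * \<gamma> - \<alpha>) * \<alpha>" using I' by (simp add: algebra_simps power2_eq_square)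
  then have "(\<beta>\<^sup>2 + \<gamma>\<^sup>2) / \<alpha> = KK x y * \<beta> * \<gamma> - \<alpha>" using ap by simp
  then show ?thesis using st unfolding \<alpha>_def \<beta>_def \<gamma>_def by simp
qed

definition ev :: "real poly poly \<Rightarrow> real \<Rightarrow> real \<Rightarrow> real" where
  "ev Q u v = poly (poly Q [:u:]) v"

definition intQ :: "real poly poly \<Rightarrow> bool" where
  "intQ Q \<longleftrightarrow> (\<forall>i j. coeff (coeff Q i) j \<in> \<int>)"

definition tdb :: "real poly poly \<Rightarrow> nat \<Rightarrow> bool" where
  "tdb Q n \<longleftrightarrow> (\<forall>i j. coeff (coeff Q i) j \<noteq> 0 \<longrightarrow> i + j \<le> n)"

lemma ev_mult: "ev (P * Q) u v = ev P u v * ev Q u v"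
  unfolding ev_def by simp
lemma ev_diff: "ev (P - Q) u v = ev P u v - ev Q u v"
  unfolding ev_def by simp
lemma ev_one: "ev 1 u v = 1"
  unfolding ev_def by simp

lemma coeff2_mult:
  "coeff (coeff (P * Q) i) j =
    (\<Sum>k\<le>i. \<Sum>l\<le>j. coeff (coeff P k) l * coeff (coeff Q (i - k)) (j - l))"
  by (simp add: coeff_mult coeff_sum)

lemma intQ_mult: "intQ P \<Longrightarrow> intQ Q \<Longrightarrow> intQ (P * Q)"
  unfolding intQ_def coeff2_mult by (intro allI Ints_sum Ints_mult) auto

lemma intQ_diff: "intQ P \<Longrightarrow> intQ Q \<Longrightarrow> intQ (P - Q)"
  unfolding intQ_def by (auto intro: Ints_diff)

lemma tdb_mult:
  assumes "tdb P n" "tdb Q m" shows "tdb (P * Q) (n + m)"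
  unfolding tdb_def
proof (intro allI impI)
  fix i j assume nz: "coeff (coeff (P * Q) i) j \<noteq> 0"
  show "i + j \<le> n + m"
  proof (rule ccontr)
    assume H: "\<not> i + j \<le> n + m"
    have "coeff (coeff (P * Q) i) j = 0" unfolding coeff2_mult
    proof (intro sum.neutral ballI)
      fix k l assume k: "k \<in> {..i}" and l: "l \<in> {..j}"
      show "coeff (coeff P k) l * coeff (coeff Q (i - k)) (j - l) = 0"
      proof (cases "k + l \<le> n")
        case True
        then have "\<not> (i - k) + (j - l) \<le> m" using H k l by auto
        then have "coeff (coeff Q (i - k)) (j - l) = 0" using assms(2) unfolding tdb_def by blast
        then show ?thesis by simp
      next
        case False
        then have "coeff (coeff P k) l = 0" using assms(1) unfolding tdb_def by blast
        then show ?thesis by simp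
      qed
    qed
    then show False using nz by simp
  qed
qed

lemma tdb_mono: "tdb P n \<Longrightarrow> n \<le> m \<Longrightarrow> tdb P m"
  unfolding tdb_def by force

lemma tdb_diff: "tdb P n \<Longrightarrow> tdb Q n \<Longrightarrow> tdb (P - Q) n"
  unfolding tdb_def by force

definition Q0 :: "real poly poly" where "Q0 = [: [:1, 1:], [:1:] :]"
definition Q11 :: "real poly poly" where "Q11 = [: [:0, 1:], [:1:] :]"
definition monoQ :: "nat \<Rightarrow> nat \<Rightarrow> real poly poly" where "monoQ c d = monom (monom 1 d) c"

lemma coeff_two: "coeff [:a, b:] i = (if i = 0 then a else if i = 1 then b else 0)"
  by (cases i; cases "i - 1") (auto simp: coeff_pCons')

lemma ev_Q0: "ev Q0 u v = 1 + u + v"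
  unfolding ev_def Q0_def by (simp add: algebra_simps)
lemma ev_Q11: "ev Q11 u v = u + v"
  unfolding ev_def Q11_def by (simp add: algebra_simps)
lemma ev_monoQ: "ev (monoQ c d) u v = u ^ c * v ^ d"
  unfolding ev_def monoQ_def by (simp add: poly_monom)

lemma coeff2_Q0: "coeff (coeff Q0 i) j = (if i = 0 \<and> j \<le> 1 \<or> i = 1 \<and> j = 0 then 1 else 0)"
  unfolding Q0_def by (auto simp: coeff_two coeff_pCons')
lemma coeff2_Q11: "coeff (coeff Q11 i) j = (if i = 0 \<and> j = 1 \<or> i = 1 \<and> j = 0 then 1 else 0)"
  unfolding Q11_def by (auto simp: coeff_two coeff_pCons')
lemma coeff2_monoQ: "coeff (coeff (monoQ c d) i) j = (if i = c \<and> j = d then 1 else 0)"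
  unfolding monoQ_def by auto
lemma coeff2_one: "coeff (coeff (1::real poly poly) i) j = (if i = 0 \<and> j = 0 then 1 else 0)"
  by (simp add: one_pCons coeff_pCons')

lemma intQ_Q0: "intQ Q0" unfolding intQ_def coeff2_Q0 by auto
lemma intQ_Q11: "intQ Q11" unfolding intQ_def coeff2_Q11 by auto
lemma intQ_monoQ: "intQ (monoQ c d)" unfolding intQ_def coeff2_monoQ by auto
lemma intQ_one: "intQ 1" unfolding intQ_def coeff2_one by auto
lemma tdb_Q0: "tdb Q0 1" unfolding tdb_def coeff2_Q0 by auto
lemma tdb_Q11: "tdb Q11 1" unfolding tdb_def coeff2_Q11 by auto
lemma tdb_monoQ: "tdb (monoQ c d) (c + d)" unfolding tdb_def coeff2_monoQ by auto
lemma tdb_one: "tdb 1 0" unfolding tdb_def coeff2_one by auto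

definition good :: "nat \<Rightarrow> nat \<Rightarrow> real poly poly \<Rightarrow> bool" where
  "good p q Q \<longleftrightarrow> intQ Q \<and> tdb Q (p + q - 1) \<and>
     (\<forall>x y. x > 0 \<longrightarrow> y > 0 \<longrightarrow> markov p q x y 1 * x ^ p * y ^ q = x * y * ev Q (x\<^sup>2) (y\<^sup>2))"

lemma good_step:
  assumes h: "markov_frac a b" "markov_frac c d" "\<bar>int a*int d - int b*int c\<bar> = 1" "a+2*c \<le> b+2*d"
    and ga: "good a b Qa" and gc: "good c d Qc" and gm: "good (a+c) (b+d) Qm"
  shows "good (a + 2 * c) (b + 2 * d) (Q0 * Qc * Qm - monoQ c d * Qa)"
proof -
  have cd1: "c + d \<ge> 1" using h(2) mf00 by (cases "c + d = 0") auto
  have ab1: "a + b \<ge> 1" using h(1) mf00 by (cases "a + b = 0") auto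
  have i: "intQ (Q0 * Qc * Qm - monoQ c d * Qa)"
    using ga gc gm unfolding good_def by (intro intQ_diff intQ_mult intQ_Q0 intQ_monoQ) auto
  have t1: "tdb (Q0 * Qc * Qm) (1 + (c + d - 1) + (a + c + (b + d) - 1))"
    using gc gm unfolding good_def by (intro tdb_mult tdb_Q0) auto
  have t2: "tdb (monoQ c d * Qa) ((c + d) + (a + b - 1))"
    using ga unfolding good_def by (intro tdb_mult tdb_monoQ) auto
  have t: "tdb (Q0 * Qc * Qm - monoQ c d * Qa) (a + 2 * c + (b + 2 * d) - 1)"
    by (rule tdb_diff; rule tdb_mono[OF t1] tdb_mono[OF t2]) (use cd1 ab1 in linarith)+
  have v: "markov (a + 2 * c) (b + 2 * d) x y 1 * x ^ (a + 2 * c) * y ^ (b + 2 * d) =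
      x * y * ev (Q0 * Qc * Qm - monoQ c d * Qa) (x\<^sup>2) (y\<^sup>2)" if xy: "x > 0" "y > 0" for x y
  proof -
    define Ma where "Ma = markov a b x y 1"
    define Mc where "Mc = markov c d x y 1"
    define Mm where "Mm = markov (a+c) (b+d) x y 1"
    define Sa where "Sa = ev Qa (x\<^sup>2) (y\<^sup>2)"
    define Sc where "Sc = ev Qc (x\<^sup>2) (y\<^sup>2)"
    define Sm where "Sm = ev Qm (x\<^sup>2) (y\<^sup>2)"
    have ea: "Ma * x ^ a * y ^ b = x * y * Sa" using ga xy unfolding good_def Ma_def Sa_def by blast
    have ec: "Mc * x ^ c * y ^ d = x * y * Sc" using gc xy unfolding good_def Mc_def Sc_def by blast
    have em: "Mm * x ^ (a + c) * y ^ (b + d) = x * y * Sm" using gm xy unfolding good_def Mm_def Sm_def by blast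
    have vi: "markov (a + 2 * c) (b + 2 * d) x y 1 = KK x y * Mc * Mm - Ma"
      unfolding Ma_def Mc_def Mm_def by (rule markov_vieta[OF xy h])
    have px: "x ^ (a + 2 * c) = x ^ c * x ^ (a + c)" "y ^ (b + 2 * d) = y ^ d * y ^ (b + d)"
      using power_add[of x c "a+c"] power_add[of y d "b+d"] by (simp_all add: mult_2 add_ac)
    have px2: "x ^ (a + 2 * c) = x ^ a * (x\<^sup>2) ^ c" "y ^ (b + 2 * d) = y ^ b * (y\<^sup>2) ^ d"
      by (simp_all add: power_add power_mult[symmetric] mult.commute)
    have T1: "KK x y * Mc * Mm * x ^ (a + 2 * c) * y ^ (b + 2 * d) = x * y * ((1 + x\<^sup>2 + y\<^sup>2) * Sc * Sm)"
    proof -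
      have "KK x y * Mc * Mm * x ^ (a + 2 * c) * y ^ (b + 2 * d) =
          KK x y * (Mc * x ^ c * y ^ d) * (Mm * x ^ (a + c) * y ^ (b + d))"
        unfolding px by (simp add: algebra_simps)
      also have "\<dots> = KK x y * (x * y * Sc) * (x * y * Sm)" unfolding ec em ..
      also have "\<dots> = x * y * ((1 + x\<^sup>2 + y\<^sup>2) * Sc * Sm)"
        unfolding KK_def using xy by (simp add: field_simps power2_eq_square)
      finally show ?thesis .
    qed
    have T2: "Ma * x ^ (a + 2 * c) * y ^ (b + 2 * d) = x * y * ((x\<^sup>2) ^ c * (y\<^sup>2) ^ d * Sa)"
    proof -
      have "Ma * x ^ (a + 2 * c) * y ^ (b + 2 * d) = (Ma * x ^ a * y ^ b) * ((x\<^sup>2) ^ c * (y\<^sup>2) ^ d)"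
        unfolding px2 by (simp add: algebra_simps)
      also have "\<dots> = x * y * ((x\<^sup>2) ^ c * (y\<^sup>2) ^ d * Sa)" unfolding ea by (simp add: algebra_simps)
      finally show ?thesis .
    qed
    have Eev: "ev (Q0 * Qc * Qm - monoQ c d * Qa) (x\<^sup>2) (y\<^sup>2) = (1 + x\<^sup>2 + y\<^sup>2) * Sc * Sm - (x\<^sup>2) ^ c * (y\<^sup>2) ^ d * Sa"
      unfolding Sa_def Sc_def Sm_def by (simp add: ev_diff ev_mult ev_Q0 ev_monoQ)
    have "markov (a + 2 * c) (b + 2 * d) x y 1 * x ^ (a + 2 * c) * y ^ (b + 2 * d) =
       KK x y * Mc * Mm * x ^ (a + 2 * c) * y ^ (b + 2 * d) - Ma * x ^ (a + 2 * c) * y ^ (b + 2 * d)"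
      unfolding vi by (simp add: algebra_simps)
    also have "\<dots> = x * y * ((1 + x\<^sup>2 + y\<^sup>2) * Sc * Sm) - x * y * ((x\<^sup>2) ^ c * (y\<^sup>2) ^ d * Sa)"
      unfolding T1 T2 ..
    also have "\<dots> = x * y * ev (Q0 * Qc * Qm - monoQ c d * Qa) (x\<^sup>2) (y\<^sup>2)"
      unfolding Eev by (simp add: algebra_simps)
    finally show ?thesis .
  qed
  show ?thesis unfolding good_def using i t v by blast
qed

lemmas markov_10' = markov_10[unfolded One_nat_def]
lemmas markov_01' = markov_01[unfolded One_nat_def]
lemmas markov_11' = markov_11[unfolded One_nat_def]

lemma good_exists: "markov_frac p q \<Longrightarrow> \<exists>Q. good p q Q"
proof (induction q arbitrary: p rule: less_induct)
  case (less q)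
  show ?case
  proof (cases "q \<ge> 2")
    case True
    have cop: "coprime p q" and pq: "p \<le> q" using less.prems True by (auto simp: markov_frac_def)
    obtain a b c d where D: "markov_frac a b" "markov_frac c d" "\<bar>int a*int d - int b*int c\<bar> = 1"
      "a + 2*c \<le> b + 2*d" "p = a + 2*c" "q = b + 2*d" "1 \<le> d" "2*d \<le> q"
      using decomp_exists[OF cop pq True] by blast
    obtain Qa where "good a b Qa" using less.IH[of b a] D by auto
    moreover obtain Qc where "good c d Qc" using less.IH[of d c] D by auto
    moreover obtain Qm where "good (a+c) (b+d) Qm"
      using less.IH[of "b+d" "a+c"] D mid_frac[OF D(1-4)] by auto
    ultimately have "good (a + 2 * c) (b + 2 * d) (Q0 * Qc * Qm - monoQ c d * Qa)"
      using good_step[OF D(1-4)] by blast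
    then show ?thesis using D by auto
  next
    case False
    then have "q = 0 \<or> q = 1" by linarith
    then show ?thesis
    proof
      assume "q = 0"
      then have "p = 1" using less.prems by (simp add: markov_frac_def)
      have "good 1 0 1" unfolding good_def using intQ_one tdb_one by (simp add: markov_10 markov_10' ev_one)
      then show ?thesis using \<open>q = 0\<close> \<open>p = 1\<close> by blast
    next
      assume "q = 1"
      then have "p = 0 \<or> p = 1" using less.prems by (auto simp: markov_frac_def)
      moreover have "good 0 1 1" unfolding good_def using intQ_one tdb_one by (simp add: markov_01 markov_01' ev_one)
      moreover have "good 1 1 Q11" unfolding good_def using intQ_Q11 tdb_Q11
        by (simp add: markov_11 markov_11' ev_Q11 algebra_simps power2_eq_square)
      ultimately show ?thesis using \<open>q = 1\<close> by blast
    qed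
  qed
qed

definition TT :: "nat \<Rightarrow> (nat \<times> nat) set" where "TT n = {(i, j). i + j \<le> n}"

lemma TT_sub: "TT n \<subseteq> {..n} \<times> {..n}" unfolding TT_def by auto
lemma finite_TT: "finite (TT n)" using TT_sub by (rule finite_subset) auto

lemma poly_sumN: "degree (p :: 'a::comm_semiring_1 poly) \<le> N \<Longrightarrow> poly p x = (\<Sum>i\<le>N. coeff p i * x ^ i)"
proof -
  assume "degree p \<le> N"
  then have "poly p x = poly (\<Sum>i\<le>N. monom (coeff p i) i) x" using poly_as_sum_of_monoms' by metis
  also have "\<dots> = (\<Sum>i\<le>N. poly (monom (coeff p i) i) x)" by (rule poly_sum)
  also have "\<dots> = (\<Sum>i\<le>N. coeff p i * x ^ i)" by (rule sum.cong[OF refl]) (rule Polynomial.poly_monom)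
  finally show ?thesis .
qed

lemma ev_sum:
  assumes t: "tdb Q n"
  shows "ev Q u v = (\<Sum>(i, j)\<in>TT n. coeff (coeff Q i) j * u ^ i * v ^ j)"
proof -
  have dQ: "degree Q \<le> n"
  proof (rule degree_le, intro allI impI)
    fix i assume "n < i"
    show "coeff Q i = 0"
    proof (rule ccontr)
      assume "coeff Q i \<noteq> 0"
      then obtain j where "coeff (coeff Q i) j \<noteq> 0" by (metis leading_coeff_neq_0)
      then show False using t \<open>n < i\<close> unfolding tdb_def by force
    qed
  qed
  have di: "degree (coeff Q i) \<le> n" for i
  proof (rule degree_le, intro allI impI)
    fix j assume "n < j"
    then show "coeff (coeff Q i) j = 0" using t unfolding tdb_def by force
  qed
  have "ev Q u v = poly (\<Sum>i\<le>n. coeff Q i * [:u:] ^ i) v"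
    unfolding ev_def using poly_sumN[OF dQ, of "[:u:]"] by simp
  also have "\<dots> = (\<Sum>i\<le>n. poly (coeff Q i) v * u ^ i)"
    by (simp add: poly_sum poly_power)
  also have "\<dots> = (\<Sum>i\<le>n. \<Sum>j\<le>n. coeff (coeff Q i) j * u ^ i * v ^ j)"
    by (rule sum.cong[OF refl]) (simp add: poly_sumN[OF di] sum_distrib_right sum_distrib_left algebra_simps)
  also have "\<dots> = (\<Sum>(i, j)\<in>{..n} \<times> {..n}. coeff (coeff Q i) j * u ^ i * v ^ j)"
    by (simp add: sum.cartesian_product)
  also have "\<dots> = (\<Sum>(i, j)\<in>TT n. coeff (coeff Q i) j * u ^ i * v ^ j)"
    by (rule sum.mono_neutral_right) (use t in \<open>auto simp: tdb_def TT_def\<close>)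
  finally show ?thesis .
qed

lemma of_int_floor_Ints: "(x::real) \<in> \<int> \<Longrightarrow> of_int \<lfloor>x\<rfloor> = x"
  by (metis Ints_cases floor_of_int)

lemma term_eq2:
  fixes X Y z c :: real
  assumes ij: "i + j \<le> n"
  shows "c * (X\<^sup>2) ^ i * (Y\<^sup>2) ^ j * (z\<^sup>2) ^ n =
         c * ((X * z)\<^sup>2) ^ i * ((Y * z)\<^sup>2) ^ j * (z\<^sup>2) ^ (n - i - j)"
proof -
  have "(z\<^sup>2) ^ n = (z\<^sup>2) ^ i * (z\<^sup>2) ^ j * (z\<^sup>2) ^ (n - i - j)"
  proof -
    have "(z\<^sup>2) ^ i * (z\<^sup>2) ^ j * (z\<^sup>2) ^ (n - i - j) = (z\<^sup>2) ^ (i + j + (n - i - j))"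
      by (simp add: power_add)
    also have "i + j + (n - i - j) = n" using ij by simp
    finally show ?thesis by simp
  qed
  then show ?thesis by (simp add: power_mult_distrib algebra_simps)
qed

lemma good_mnc:
  assumes a: "a \<ge> 1" and b: "b \<ge> 1" and m: "markov_frac a b" and g: "good a b Q"
  shows "markov_numerator_coeffs a b (\<lambda>i j. \<lfloor>coeff (coeff Q i) j\<rfloor>)"
proof -
  define n where "n = a + b - 1"
  define A where "A = (\<lambda>i j. \<lfloor>coeff (coeff Q i) j\<rfloor>)"
  have iQ: "intQ Q" and tQ: "tdb Q n" and vQ: "\<And>x y. x > 0 \<Longrightarrow> y > 0 \<Longrightarrow>
      markov a b x y 1 * x ^ a * y ^ b = x * y * ev Q (x\<^sup>2) (y\<^sup>2)"
    using g unfolding good_def n_def by auto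
  have Ac: "of_int (A i j) = coeff (coeff Q i) j" for i j
    using iQ unfolding intQ_def A_def by (metis Ints_cases floor_of_int)
  have c1: "\<forall>i j. A i j \<noteq> 0 \<longrightarrow> i + j \<le> a + b - 1"
  proof (intro allI impI)
    fix i j assume "A i j \<noteq> 0"
    then have "coeff (coeff Q i) j \<noteq> 0" using Ac[of i j] by auto
    then show "i + j \<le> a + b - 1" using tQ unfolding tdb_def n_def by blast
  qed
  have c2: "markov a b x y z =
      (\<Sum>(i, j) \<in> {(i, j). i + j \<le> a + b - 1}.
          of_int (A i j) * (x\<^sup>2) ^ i * (y\<^sup>2) ^ j * (z\<^sup>2) ^ (a + b - 1 - i - j))
      / (x ^ (a - 1) * y ^ (b - 1) * z ^ (a + b - 1))"
    if xyz: "x > 0" "y > 0" "z > 0" for x y z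
  proof -
    define X where "X = x / z"
    define Y where "Y = y / z"
    have XY: "X > 0" "Y > 0" "X * z = x" "Y * z = y" unfolding X_def Y_def using xyz by auto
    have h: "markov a b x y z = z * markov a b X Y 1" unfolding X_def Y_def
      by (rule markov_hom[OF m]) (use xyz in simp)
    have e1: "markov a b X Y 1 * X ^ a * Y ^ b = X * Y * ev Q (X\<^sup>2) (Y\<^sup>2)" by (rule vQ[OF XY(1,2)])
    have pa: "X ^ a = X * X ^ (a - 1)" "Y ^ b = Y * Y ^ (b - 1)"
      using a b by (simp_all add: power_eq_if)
    have e2: "markov a b X Y 1 * X ^ (a - 1) * Y ^ (b - 1) = ev Q (X\<^sup>2) (Y\<^sup>2)"
    proof -
      have "X * Y * (markov a b X Y 1 * X ^ (a - 1) * Y ^ (b - 1)) = X * Y * ev Q (X\<^sup>2) (Y\<^sup>2)"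
        using e1 unfolding pa by (simp add: algebra_simps)
      then show ?thesis using XY by simp
    qed
    have zn: "z * z ^ (a - 1) * z ^ (b - 1) * z ^ n = (z\<^sup>2) ^ n"
    proof -
      have "1 + (a - 1) + (b - 1) + n = 2 * n" using a b unfolding n_def by linarith
      moreover have "z * z ^ (a - 1) * z ^ (b - 1) * z ^ n = z ^ (1 + (a - 1) + (b - 1) + n)"
        by (simp add: power_add)
      ultimately show ?thesis by (metis power_mult)
    qed
    have "markov a b x y z * (x ^ (a - 1) * y ^ (b - 1) * z ^ n) =
        markov a b X Y 1 * X ^ (a - 1) * Y ^ (b - 1) * (z * z ^ (a - 1) * z ^ (b - 1) * z ^ n)"
    proof -
      have px: "x ^ (a - 1) = X ^ (a - 1) * z ^ (a - 1)" "y ^ (b - 1) = Y ^ (b - 1) * z ^ (b - 1)"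
        unfolding XY(3,4)[symmetric] by (simp_all add: power_mult_distrib)
      show ?thesis unfolding h px by (simp add: algebra_simps)
    qed
    also have "\<dots> = ev Q (X\<^sup>2) (Y\<^sup>2) * (z\<^sup>2) ^ n" unfolding e2 zn ..
    also have "\<dots> = (\<Sum>(i, j)\<in>TT n. coeff (coeff Q i) j * (X\<^sup>2) ^ i * (Y\<^sup>2) ^ j * (z\<^sup>2) ^ n)"
      unfolding ev_sum[OF tQ] by (simp add: sum_distrib_right case_prod_beta)
    also have "\<dots> = (\<Sum>(i, j)\<in>TT n. of_int (A i j) * (x\<^sup>2) ^ i * (y\<^sup>2) ^ j * (z\<^sup>2) ^ (n - i - j))"
    proof (rule sum.cong[OF refl])
      fix p assume "p \<in> TT n"
      then obtain i j where p: "p = (i, j)" "i + j \<le> n" unfolding TT_def by auto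
      show "(case p of (i, j) \<Rightarrow> coeff (coeff Q i) j * (X\<^sup>2) ^ i * (Y\<^sup>2) ^ j * (z\<^sup>2) ^ n) =
            (case p of (i, j) \<Rightarrow> of_int (A i j) * (x\<^sup>2) ^ i * (y\<^sup>2) ^ j * (z\<^sup>2) ^ (n - i - j))"
        unfolding p(1) using term_eq2[OF p(2), of "coeff (coeff Q i) j" X Y z] unfolding XY(3,4) Ac by simp
    qed
    finally have "markov a b x y z * (x ^ (a - 1) * y ^ (b - 1) * z ^ n) =
        (\<Sum>(i, j)\<in>TT n. of_int (A i j) * (x\<^sup>2) ^ i * (y\<^sup>2) ^ j * (z\<^sup>2) ^ (n - i - j))" .
    moreover have "x ^ (a - 1) * y ^ (b - 1) * z ^ n > 0" using xyz by simp
    ultimately have "markov a b x y z =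
        (\<Sum>(i, j)\<in>TT n. of_int (A i j) * (x\<^sup>2) ^ i * (y\<^sup>2) ^ j * (z\<^sup>2) ^ (n - i - j)) /
          (x ^ (a - 1) * y ^ (b - 1) * z ^ n)"
      by (metis nonzero_mult_div_cancel_right order_less_irrefl)
    then show ?thesis unfolding TT_def n_def .
  qed
  show ?thesis unfolding markov_numerator_coeffs_def A_def[symmetric] using c1 c2 by blast
qed

lemma exists_mnc:
  assumes "1 \<le> a" "a \<le> b" "coprime a b"
  shows "\<exists>A. markov_numerator_coeffs a b A"
proof -
  have m: "markov_frac a b" using assms unfolding markov_frac_def by simp
  obtain Q where "good a b Q" using good_exists[OF m] by blast
  then show ?thesis using good_mnc[OF assms(1) _ m] assms by (meson order_trans)
qed

definition SS :: "nat \<Rightarrow> (nat \<Rightarrow> nat \<Rightarrow> int) \<Rightarrow> real \<Rightarrow> real \<Rightarrow> real" where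
  "SS n A u v = (\<Sum>(i, j)\<in>TT n. of_int (A i j) * u ^ i * v ^ j)"

definition G :: "nat \<Rightarrow> nat \<Rightarrow> (nat \<Rightarrow> nat \<Rightarrow> int) \<Rightarrow> bool" where
  "G p q A \<longleftrightarrow> (\<forall>i j. A i j \<noteq> 0 \<longrightarrow> i + j \<le> p + q - 1) \<and>
     (\<forall>x y. x > 0 \<longrightarrow> y > 0 \<longrightarrow> markov p q x y 1 * x ^ p * y ^ q = x * y * SS (p + q - 1) A (x\<^sup>2) (y\<^sup>2))"

lemma G_of_good:
  assumes "good p q Q" shows "G p q (\<lambda>i j. \<lfloor>coeff (coeff Q i) j\<rfloor>)"
proof -
  have iQ: "intQ Q" and tQ: "tdb Q (p + q - 1)" and vQ: "\<And>x y. x > 0 \<Longrightarrow> y > 0 \<Longrightarrow>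
      markov p q x y 1 * x ^ p * y ^ q = x * y * ev Q (x\<^sup>2) (y\<^sup>2)"
    using assms unfolding good_def by auto
  have Ac: "of_int \<lfloor>coeff (coeff Q i) j\<rfloor> = coeff (coeff Q i) j" for i j
    using iQ unfolding intQ_def by (metis Ints_cases floor_of_int)
  have "ev Q u v = SS (p + q - 1) (\<lambda>i j. \<lfloor>coeff (coeff Q i) j\<rfloor>) u v" for u v
    unfolding ev_sum[OF tQ] SS_def Ac ..
  moreover have "\<forall>i j. \<lfloor>coeff (coeff Q i) j\<rfloor> \<noteq> 0 \<longrightarrow> i + j \<le> p + q - 1"
  proof (intro allI impI)
    fix i j assume "\<lfloor>coeff (coeff Q i) j\<rfloor> \<noteq> 0"
    then have "coeff (coeff Q i) j \<noteq> 0" using Ac[of i j] by auto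
    then show "i + j \<le> p + q - 1" using tQ unfolding tdb_def by blast
  qed
  ultimately show ?thesis unfolding G_def using vQ by simp
qed

lemma G_of_mnc:
  assumes a: "a \<ge> 1" and b: "b \<ge> 1" and M: "markov_numerator_coeffs a b A"
  shows "G a b A"
proof -
  have c1: "\<forall>i j. A i j \<noteq> 0 \<longrightarrow> i + j \<le> a + b - 1" using M unfolding markov_numerator_coeffs_def by blast
  have v: "markov a b x y 1 * x ^ a * y ^ b = x * y * SS (a + b - 1) A (x\<^sup>2) (y\<^sup>2)"
    if xy: "x > 0" "y > 0" for x y
  proof -
    have "markov a b x y 1 = SS (a + b - 1) A (x\<^sup>2) (y\<^sup>2) / (x ^ (a - 1) * y ^ (b - 1))"
      using M xy unfolding markov_numerator_coeffs_def SS_def TT_def by simp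
    moreover have "x ^ a = x * x ^ (a - 1)" "y ^ b = y * y ^ (b - 1)" using a b by (simp_all add: power_eq_if)
    moreover have "x ^ (a - 1) * y ^ (b - 1) > 0" using xy by simp
    ultimately show ?thesis by (simp add: field_simps)
  qed
  show ?thesis unfolding G_def using c1 v by blast
qed

definition img :: "nat \<Rightarrow> (nat \<Rightarrow> nat \<Rightarrow> int) \<Rightarrow> nat \<Rightarrow> nat \<Rightarrow> real poly" where
  "img n A X Y = (\<Sum>(i, j)\<in>TT n. monom (of_int (A i j)) (X * i + Y * j))"

lemma poly_img: "poly (img n A X Y) t = SS n A (t ^ X) (t ^ Y)"
  unfolding img_def SS_def poly_sum
  by (rule sum.cong[OF refl]) (auto simp: poly_monom power_add power_mult[symmetric] algebra_simps)

lemma coeff_img: "coeff (img n A X Y) k = (\<Sum>(i, j)\<in>TT n. if X * i + Y * j = k then of_int (A i j) else 0)"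
  unfolding img_def coeff_sum by (rule sum.cong[OF refl]) auto

lemma poly_zero_pos:
  fixes p :: "real poly"
  assumes "\<And>t. t > 0 \<Longrightarrow> poly p t = 0" shows "p = 0"
proof (rule ccontr)
  assume "p \<noteq> 0"
  then have "finite {t. poly p t = 0}" by (rule poly_roots_finite)
  moreover have "{0<..} \<subseteq> {t. poly p t = 0}" using assms by auto
  ultimately have "finite {(0::real)<..}" by (rule finite_subset[rotated])
  then show False using infinite_Ioi by blast
qed

lemma G_poly:
  assumes g: "G p q A" and xy: "x > 0" "y > 0" and x2: "x\<^sup>2 = t ^ X" "y\<^sup>2 = t ^ Y"
  shows "markov p q x y 1 * x ^ p * y ^ q = x * y * poly (img (p + q - 1) A X Y) t"
  unfolding poly_img x2[symmetric] using g xy unfolding G_def by blast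

lemma img_rec:
  assumes h: "markov_frac a b" "markov_frac c d" "\<bar>int a*int d - int b*int c\<bar> = 1" "a+2*c \<le> b+2*d"
    and Gn: "G (a + 2 * c) (b + 2 * d) An" and Ga: "G a b Aa" and Gc: "G c d Ac" and Gm: "G (a+c) (b+d) Am"
  shows "img (a + 2 * c + (b + 2 * d) - 1) An X Y * img (a + b - 1) Aa X Y =
         monom 1 (a * X + b * Y) * (img (c + d - 1) Ac X Y)\<^sup>2 + (img (a + c + (b + d) - 1) Am X Y)\<^sup>2"
    (is "?Pn * ?Pa = monom 1 ?K * ?Pc\<^sup>2 + ?Pm\<^sup>2")
proof -
  have "?Pn * ?Pa - (monom 1 ?K * ?Pc\<^sup>2 + ?Pm\<^sup>2) = 0"
  proof (rule poly_zero_pos)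
    fix t :: real assume t: "t > 0"
    define x where "x = sqrt (t ^ X)"
    define y where "y = sqrt (t ^ Y)"
    have xy: "x > 0" "y > 0" unfolding x_def y_def using t by auto
    have x2: "x\<^sup>2 = t ^ X" "y\<^sup>2 = t ^ Y" unfolding x_def y_def using t by auto
    define Sn where "Sn = poly ?Pn t"
    define Sa where "Sa = poly ?Pa t"
    define Sc where "Sc = poly ?Pc t"
    define Sm where "Sm = poly ?Pm t"
    define Mn where "Mn = markov (a + 2 * c) (b + 2 * d) x y 1"
    define Ma where "Ma = markov a b x y 1"
    define Mc where "Mc = markov c d x y 1"
    define Mm where "Mm = markov (a + c) (b + d) x y 1"
    have en: "Mn * x ^ (a + 2 * c) * y ^ (b + 2 * d) = x * y * Sn"
      unfolding Mn_def Sn_def by (rule G_poly[OF Gn xy x2])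
    have ea: "Ma * x ^ a * y ^ b = x * y * Sa"
      unfolding Ma_def Sa_def by (rule G_poly[OF Ga xy x2])
    have ec: "Mc * x ^ c * y ^ d = x * y * Sc"
      unfolding Mc_def Sc_def by (rule G_poly[OF Gc xy x2])
    have em: "Mm * x ^ (a + c) * y ^ (b + d) = x * y * Sm"
      unfolding Mm_def Sm_def by (rule G_poly[OF Gm xy x2])
    have ap: "Ma > 0" unfolding Ma_def using markov_pos[OF h(1) xy] by simp
    have st: "Mn = (Mc\<^sup>2 + Mm\<^sup>2) / Ma" unfolding Mn_def Mc_def Mm_def Ma_def by (rule markov_step[OF h])
    then have st2: "Mn * Ma = Mc\<^sup>2 + Mm\<^sup>2" using ap by simp
    have pw1: "x ^ (a + 2 * c) * x ^ a = (x ^ c)\<^sup>2 * (x\<^sup>2) ^ a" "y ^ (b + 2 * d) * y ^ b = (y ^ d)\<^sup>2 * (y\<^sup>2) ^ b"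
      by (simp_all add: power_add[symmetric] power_mult[symmetric] algebra_simps)
    have pw2: "x ^ (a + 2 * c) * x ^ a = (x ^ (a + c))\<^sup>2" "y ^ (b + 2 * d) * y ^ b = (y ^ (b + d))\<^sup>2"
      by (simp_all add: power_add[symmetric] power_mult[symmetric] algebra_simps)
    have "(x * y)\<^sup>2 * (Sn * Sa) = (Mn * x ^ (a + 2 * c) * y ^ (b + 2 * d)) * (Ma * x ^ a * y ^ b)"
      unfolding en ea by (simp add: algebra_simps power2_eq_square)
    also have "\<dots> = (Mn * Ma) * ((x ^ (a + 2 * c) * x ^ a) * (y ^ (b + 2 * d) * y ^ b))"
      by (simp add: algebra_simps)
    also have "\<dots> = Mc\<^sup>2 * ((x ^ (a + 2 * c) * x ^ a) * (y ^ (b + 2 * d) * y ^ b)) +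
                   Mm\<^sup>2 * ((x ^ (a + 2 * c) * x ^ a) * (y ^ (b + 2 * d) * y ^ b))"
      unfolding st2 by (simp add: algebra_simps)
    also have "\<dots> = (Mc * x ^ c * y ^ d)\<^sup>2 * ((x\<^sup>2) ^ a * (y\<^sup>2) ^ b) + (Mm * x ^ (a + c) * y ^ (b + d))\<^sup>2"
    proof -
      have e1: "Mc\<^sup>2 * ((x ^ (a + 2 * c) * x ^ a) * (y ^ (b + 2 * d) * y ^ b)) =
          (Mc * x ^ c * y ^ d)\<^sup>2 * ((x\<^sup>2) ^ a * (y\<^sup>2) ^ b)"
        unfolding pw1 by (simp add: power_mult_distrib algebra_simps)
      have e2: "Mm\<^sup>2 * ((x ^ (a + 2 * c) * x ^ a) * (y ^ (b + 2 * d) * y ^ b)) =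
          (Mm * x ^ (a + c) * y ^ (b + d))\<^sup>2"
        unfolding pw2 by (simp add: power_mult_distrib algebra_simps)
      show ?thesis unfolding e1 e2 ..
    qed
    also have "\<dots> = (x * y)\<^sup>2 * (Sc\<^sup>2 * ((x\<^sup>2) ^ a * (y\<^sup>2) ^ b) + Sm\<^sup>2)"
      unfolding ec em by (simp add: power_mult_distrib algebra_simps)
    finally have "(x * y)\<^sup>2 * (Sn * Sa) = (x * y)\<^sup>2 * (Sc\<^sup>2 * ((x\<^sup>2) ^ a * (y\<^sup>2) ^ b) + Sm\<^sup>2)" .
    then have E: "Sn * Sa = Sc\<^sup>2 * ((x\<^sup>2) ^ a * (y\<^sup>2) ^ b) + Sm\<^sup>2" using xy by simp
    have "poly (monom 1 ?K) t = (x\<^sup>2) ^ a * (y\<^sup>2) ^ b"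
      unfolding x2 by (simp add: poly_monom power_add power_mult[symmetric] algebra_simps)
    then show "poly (?Pn * ?Pa - (monom 1 ?K * ?Pc\<^sup>2 + ?Pm\<^sup>2)) t = 0"
      using E unfolding Sn_def Sa_def Sc_def Sm_def by (simp add: algebra_simps power2_eq_square)
  qed
  then show ?thesis by simp
qed

definition lo :: "real poly \<Rightarrow> nat" where "lo p = (LEAST k. coeff p k \<noteq> 0)"

lemma lo_coeff: "p \<noteq> 0 \<Longrightarrow> coeff p (lo p) \<noteq> 0"
proof -
  assume "p \<noteq> 0"
  then obtain k where "coeff p k \<noteq> 0" by (metis leading_coeff_neq_0)
  then show ?thesis unfolding lo_def by (rule LeastI)
qed

lemma lo_less: "k < lo p \<Longrightarrow> coeff p k = 0"
  unfolding lo_def using not_less_Least by blast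

lemma lo_eqI: "coeff p m \<noteq> 0 \<Longrightarrow> (\<And>k. k < m \<Longrightarrow> coeff p k = 0) \<Longrightarrow> lo p = m"
  unfolding lo_def by (rule Least_equality) (auto simp: not_less[symmetric])

lemma lo_mult:
  assumes p: "p \<noteq> 0" and q: "q \<noteq> 0"
  shows "coeff (p * q) (lo p + lo q) = coeff p (lo p) * coeff q (lo q)"
    "lo (p * q) = lo p + lo q"
proof -
  have z: "coeff (p * q) k = 0" if "k < lo p + lo q" for k
    unfolding coeff_mult
  proof (rule sum.neutral, rule ballI)
    fix i assume ik: "i \<in> {..k}"
    show "coeff p i * coeff q (k - i) = 0"
    proof (cases "i < lo p")
      case True then show ?thesis by (simp add: lo_less)
    next
      case False then have "k - i < lo q" using that ik by auto
      then show ?thesis by (simp add: lo_less)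
    qed
  qed
  show e: "coeff (p * q) (lo p + lo q) = coeff p (lo p) * coeff q (lo q)"
  proof -
    let ?k = "lo p + lo q"
    have "coeff (p * q) ?k = (\<Sum>i\<le>?k. coeff p i * coeff q (?k - i))" by (rule coeff_mult)
    also have "\<dots> = coeff p (lo p) * coeff q (?k - lo p) +
        (\<Sum>i\<in>{..?k} - {lo p}. coeff p i * coeff q (?k - i))"
      by (rule sum.remove) auto
    also have "(\<Sum>i\<in>{..?k} - {lo p}. coeff p i * coeff q (?k - i)) = 0"
    proof (rule sum.neutral, rule ballI)
      fix i assume i: "i \<in> {..?k} - {lo p}"
      show "coeff p i * coeff q (?k - i) = 0"
      proof (cases "i < lo p")
        case True then show ?thesis by (simp add: lo_less)
      next
        case False then have "?k - i < lo q" using i by auto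
        then show ?thesis by (simp add: lo_less)
      qed
    qed
    finally show ?thesis by simp
  qed
  show "lo (p * q) = lo p + lo q"
    by (rule lo_eqI) (use e lo_coeff[OF p] lo_coeff[OF q] z in auto)
qed

definition posl :: "real poly \<Rightarrow> bool" where "posl p \<longleftrightarrow> p \<noteq> 0 \<and> coeff p (lo p) > 0"
definition posd :: "real poly \<Rightarrow> bool" where "posd p \<longleftrightarrow> p \<noteq> 0 \<and> lead_coeff p > 0"

lemma posl_add:
  assumes "posl p" "posl q"
  shows "posl (p + q)" "lo (p + q) = min (lo p) (lo q)"
proof -
  let ?m = "min (lo p) (lo q)"
  have c1: "coeff p ?m \<ge> 0" "coeff q ?m \<ge> 0"
  proof -
    show "coeff p ?m \<ge> 0"
    proof (cases "?m < lo p")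
      case True then show ?thesis by (simp add: lo_less)
    next
      case False then have "?m = lo p" by simp
      then show ?thesis using assms unfolding posl_def by simp
    qed
    show "coeff q ?m \<ge> 0"
    proof (cases "?m < lo q")
      case True then show ?thesis by (simp add: lo_less)
    next
      case False then have "?m = lo q" by simp
      then show ?thesis using assms unfolding posl_def by simp
    qed
  qed
  have "coeff p ?m > 0 \<or> coeff q ?m > 0" using assms unfolding posl_def by (auto simp: min_def)
  then have c2: "coeff (p + q) ?m > 0" using c1 by auto
  have c3: "coeff (p + q) k = 0" if "k < ?m" for k using that by (simp add: lo_less)
  have l: "lo (p + q) = ?m" by (rule lo_eqI) (use c2 c3 in auto)
  show "lo (p + q) = ?m" by (rule l)
  have "p + q \<noteq> 0" using c2 by (metis coeff_0 less_irrefl)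
  then show "posl (p + q)" unfolding posl_def l using c2 by simp
qed

lemma posl_sq: "r \<noteq> 0 \<Longrightarrow> posl (monom 1 K * r\<^sup>2) \<and> lo (monom 1 K * r\<^sup>2) = K + 2 * lo r"
proof -
  assume r: "r \<noteq> 0"
  have m: "monom (1::real) K \<noteq> 0" by simp
  have lm: "lo (monom (1::real) K) = K" by (rule lo_eqI) auto
  have cm: "coeff (monom (1::real) K) (lo (monom 1 K)) = 1" using lm by simp
  have rr: "r * r \<noteq> 0" using r by simp
  have l1: "lo (r * r) = 2 * lo r" "coeff (r * r) (lo (r * r)) = (coeff r (lo r))\<^sup>2"
    using lo_mult[OF r r] by (auto simp: power2_eq_square)
  have l2: "lo (monom 1 K * (r * r)) = K + 2 * lo r"
    "coeff (monom 1 K * (r * r)) (lo (monom 1 K * (r * r))) = (coeff r (lo r))\<^sup>2"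
    using lo_mult[OF m rr] l1 lm cm by auto
  have "(coeff r (lo r))\<^sup>2 > 0" using lo_coeff[OF r] by simp
  moreover have "monom 1 K * (r * r) \<noteq> 0" using m rr by simp
  ultimately show ?thesis using l2 unfolding posl_def power2_eq_square by simp
qed

lemma posd_add:
  assumes "posd p" "posd q"
  shows "posd (p + q)" "degree (p + q) = max (degree p) (degree q)"
proof -
  have "degree (p + q) = max (degree p) (degree q) \<and> lead_coeff (p + q) > 0"
  proof (cases "degree p = degree q")
    case True
    have le: "degree (p + q) \<le> degree p" using True by (simp add: degree_add_le)
    have c: "coeff (p + q) (degree p) > 0" using assms True unfolding posd_def by simp
    then have "degree p \<le> degree (p + q)" by (intro le_degree) simp
    then have "degree (p + q) = degree p" using le by simp
    then show ?thesis using True c by simp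
  next
    case False
    then show ?thesis
    proof (cases "degree p < degree q")
      case True
      then have "degree (p + q) = degree q" by (rule degree_add_eq_right)
      moreover have "coeff p (degree q) = 0" using True by (simp add: coeff_eq_0)
      ultimately show ?thesis using True assms unfolding posd_def by simp
    next
      case F: False
      then have lt: "degree q < degree p" using False by simp
      then have "degree (p + q) = degree p" by (rule degree_add_eq_left)
      moreover have "coeff q (degree p) = 0" using lt by (simp add: coeff_eq_0)
      ultimately show ?thesis using lt assms unfolding posd_def by simp
    qed
  qed
  moreover have "p + q \<noteq> 0" using calculation by (intro notI) simp
  ultimately show "posd (p + q)" "degree (p + q) = max (degree p) (degree q)" unfolding posd_def by auto
qed

lemma posd_sq: "r \<noteq> 0 \<Longrightarrow> posd (monom 1 K * r\<^sup>2) \<and> degree (monom 1 K * r\<^sup>2) = K + 2 * degree r"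
proof -
  assume r: "r \<noteq> 0"
  have dm: "degree (monom (1::real) K) = K" by (simp add: degree_monom_eq)
  have "monom (1::real) K * r\<^sup>2 \<noteq> 0" using r by simp
  moreover have "degree (monom (1::real) K * r\<^sup>2) = K + 2 * degree r"
    using r dm by (simp add: degree_mult_eq power2_eq_square)
  moreover have "lead_coeff (monom (1::real) K * r\<^sup>2) > 0"
  proof -
    have "lead_coeff r \<noteq> 0" using r by simp
    then have "(lead_coeff r)\<^sup>2 > 0" by simp
    then have "lead_coeff r * lead_coeff r > 0" by (simp add: power2_eq_square)
    then show ?thesis using dm by (simp add: lead_coeff_mult power2_eq_square)
  qed
  ultimately show ?thesis unfolding posd_def by simp
qed

lemma min_ident:
  fixes A B C D :: nat
  shows "min (A + 2 * C) (B + 2 * D) + min A B = min (A + B + 2 * min C D) (2 * min (A + C) (B + D))"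
  by (simp add: min_def)

lemma posl_monom: "posl (monom 1 K) \<and> lo (monom 1 K) = K"
proof -
  have l: "lo (monom (1::real) K) = K" by (rule lo_eqI) auto
  then show ?thesis unfolding posl_def by simp
qed

lemma posd_monom: "posd (monom 1 K) \<and> degree (monom (1::real) K) = K"
  unfolding posd_def by (simp add: degree_monom_eq)

lemma img_base_one:
  assumes g: "G p q A" and pq: "p + q = 1" and M: "\<And>x y. markov p q x y 1 * x ^ p * y ^ q = x * y"
  shows "img (p + q - 1) A X Y = 1"
proof -
  have "img (p + q - 1) A X Y - 1 = 0"
  proof (rule poly_zero_pos)
    fix t :: real assume t: "t > 0"
    define x where "x = sqrt (t ^ X)"
    define y where "y = sqrt (t ^ Y)"
    have xy: "x > 0" "y > 0" unfolding x_def y_def using t by auto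
    have x2: "x\<^sup>2 = t ^ X" "y\<^sup>2 = t ^ Y" unfolding x_def y_def using t by auto
    have "x * y = x * y * poly (img (p + q - 1) A X Y) t" using G_poly[OF g xy x2] M by simp
    then have "poly (img (p + q - 1) A X Y) t = 1" using xy by simp
    then show "poly (img (p + q - 1) A X Y - 1) t = 0" by simp
  qed
  then show ?thesis by simp
qed

lemma img_base_11:
  assumes g: "G 1 1 A"
  shows "img (1 + 1 - 1) A X Y = monom 1 X + monom 1 Y"
proof -
  have "img (1 + 1 - 1) A X Y - (monom 1 X + monom 1 Y) = 0"
  proof (rule poly_zero_pos)
    fix t :: real assume t: "t > 0"
    define x where "x = sqrt (t ^ X)"
    define y where "y = sqrt (t ^ Y)"
    have xy: "x > 0" "y > 0" unfolding x_def y_def using t by auto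
    have x2: "x\<^sup>2 = t ^ X" "y\<^sup>2 = t ^ Y" unfolding x_def y_def using t by auto
    have "markov 1 1 x y 1 * x ^ 1 * y ^ 1 = x * y * poly (img (1 + 1 - 1) A X Y) t"
      by (rule G_poly[OF g xy x2])
    then have "(x\<^sup>2 + y\<^sup>2) * (x * y) = x * y * poly (img (1 + 1 - 1) A X Y) t"
      by (simp add: markov_11 markov_11' algebra_simps)
    then have "poly (img (1 + 1 - 1) A X Y) t = x\<^sup>2 + y\<^sup>2" using xy by simp
    then show "poly (img (1 + 1 - 1) A X Y - (monom 1 X + monom 1 Y)) t = 0"
      unfolding x2 by (simp add: poly_monom)
  qed
  then show ?thesis by simp
qed

lemma deg_arith:
  fixes a b c d X Y :: nat
  assumes cd: "c + d \<ge> 1" and ab: "a + b \<ge> 1"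
  defines "M \<equiv> max X Y"
  shows "max (a * X + b * Y + 2 * ((c + d - 1) * M)) (2 * ((a + c + (b + d) - 1) * M)) =
         (a + 2 * c + (b + 2 * d) - 1) * M + (a + b - 1) * M"
proof -
  have X: "a * X \<le> a * M" "b * Y \<le> b * M" unfolding M_def by (auto intro: mult_le_mono2)
  have m1: "M \<le> c * M + d * M" using cd by (metis add_mult_distrib mult_1 mult_le_mono1)
  have m2: "M \<le> a * M + b * M" using ab by (metis add_mult_distrib mult_1 mult_le_mono1)
  obtain u where u: "c * M + d * M = M + u" using m1 le_Suc_ex by blast
  obtain w where w: "a * M + b * M = M + w" using m2 le_Suc_ex by blast
  have e1: "(c + d - 1) * M = u" using cd u by (simp add: diff_mult_distrib algebra_simps)
  have e2: "(a + c + (b + d) - 1) * M = M + u + w" using cd u w by (simp add: diff_mult_distrib algebra_simps)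
  have e3: "(a + 2 * c + (b + 2 * d) - 1) * M = 2 * M + w + 2 * u"
    using cd u w by (simp add: diff_mult_distrib algebra_simps)
  have e4: "(a + b - 1) * M = w" using ab w by (simp add: diff_mult_distrib algebra_simps)
  have "a * X + b * Y \<le> M + w" using X w by linarith
  then show ?thesis unfolding e1 e2 e3 e4 by (simp add: max_def)
qed

lemma claimC:
  "markov_frac p q \<Longrightarrow> G p q A \<Longrightarrow>
    img (p + q - 1) A X Y \<noteq> 0 \<and> lo (img (p + q - 1) A X Y) = min (p * X) (q * Y) \<and>
    degree (img (p + q - 1) A X Y) = (p + q - 1) * max X Y"
proof (induction q arbitrary: p A rule: less_induct)
  case (less q)
  show ?case
  proof (cases "q \<ge> 2")
    case True
    have cop: "coprime p q" and pq: "p \<le> q" using less.prems True by (auto simp: markov_frac_def)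
    obtain a b c d where D: "markov_frac a b" "markov_frac c d" "\<bar>int a*int d - int b*int c\<bar> = 1"
      "a + 2*c \<le> b + 2*d" "p = a + 2*c" "q = b + 2*d" "1 \<le> d" "2*d \<le> q"
      using decomp_exists[OF cop pq True] by blast
    have mm: "markov_frac (a+c) (b+d)" by (rule mid_frac[OF D(1-4)])
    obtain Qa where "good a b Qa" using good_exists[OF D(1)] by blast
    then have Ga: "G a b (\<lambda>i j. \<lfloor>coeff (coeff Qa i) j\<rfloor>)" (is "G a b ?Aa") by (rule G_of_good)
    obtain Qc where "good c d Qc" using good_exists[OF D(2)] by blast
    then have Gc: "G c d (\<lambda>i j. \<lfloor>coeff (coeff Qc i) j\<rfloor>)" (is "G c d ?Ac") by (rule G_of_good)
    obtain Qm where "good (a+c) (b+d) Qm" using good_exists[OF mm] by blast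
    then have Gm: "G (a+c) (b+d) (\<lambda>i j. \<lfloor>coeff (coeff Qm i) j\<rfloor>)" (is "G _ _ ?Am") by (rule G_of_good)
    have Gn: "G (a + 2 * c) (b + 2 * d) A" using less.prems D by simp
    define Pn where "Pn = img (a + 2 * c + (b + 2 * d) - 1) A X Y"
    define Pa where "Pa = img (a + b - 1) ?Aa X Y"
    define Pc where "Pc = img (c + d - 1) ?Ac X Y"
    define Pm where "Pm = img (a + c + (b + d) - 1) ?Am X Y"
    define K where "K = a * X + b * Y"
    have rec: "Pn * Pa = monom 1 K * Pc\<^sup>2 + Pm\<^sup>2"
      unfolding Pn_def Pa_def Pc_def Pm_def K_def by (rule img_rec[OF D(1-4) Gn Ga Gc Gm])
    have IHa: "Pa \<noteq> 0 \<and> lo Pa = min (a * X) (b * Y) \<and> degree Pa = (a + b - 1) * max X Y"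
      unfolding Pa_def by (rule less.IH[OF _ D(1) Ga]) (use D in linarith)
    have IHc: "Pc \<noteq> 0 \<and> lo Pc = min (c * X) (d * Y) \<and> degree Pc = (c + d - 1) * max X Y"
      unfolding Pc_def by (rule less.IH[OF _ D(2) Gc]) (use D in linarith)
    have IHm: "Pm \<noteq> 0 \<and> lo Pm = min ((a + c) * X) ((b + d) * Y) \<and> degree Pm = (a + c + (b + d) - 1) * max X Y"
      unfolding Pm_def by (rule less.IH[OF _ mm Gm]) (use D in linarith)
    have sqc: "posl (monom 1 K * Pc\<^sup>2) \<and> lo (monom 1 K * Pc\<^sup>2) = K + 2 * lo Pc"
      using posl_sq IHc by blast
    have m0: "monom (1::real) 0 = 1" by (simp add: monom_0 one_pCons)
    have sqm: "posl (Pm\<^sup>2) \<and> lo (Pm\<^sup>2) = 2 * lo Pm"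
      using posl_sq[of Pm 0] IHm m0 by simp
    have pR: "posl (monom 1 K * Pc\<^sup>2 + Pm\<^sup>2)" and lR: "lo (monom 1 K * Pc\<^sup>2 + Pm\<^sup>2) = min (K + 2 * lo Pc) (2 * lo Pm)"
      using posl_add[of "monom 1 K * Pc\<^sup>2" "Pm\<^sup>2"] sqc sqm by auto
    have Rnz: "monom 1 K * Pc\<^sup>2 + Pm\<^sup>2 \<noteq> 0" using pR unfolding posl_def by blast
    have Pnz: "Pn \<noteq> 0" using Rnz rec by auto
    have lo_rel: "lo Pn + lo Pa = min (K + 2 * lo Pc) (2 * lo Pm)"
      using lo_mult(2)[OF Pnz, of Pa] IHa rec lR by simp
    have lo_n: "lo Pn = min (p * X) (q * Y)"
    proof -
      have "min ((a * X) + 2 * (c * X)) ((b * Y) + 2 * (d * Y)) + min (a * X) (b * Y) =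
          min ((a * X) + (b * Y) + 2 * min (c * X) (d * Y)) (2 * min ((a * X) + (c * X)) ((b * Y) + (d * Y)))"
        by (rule min_ident)
      then have "min (p * X) (q * Y) + lo Pa = min (K + 2 * lo Pc) (2 * lo Pm)"
        using IHa IHc IHm D(5,6) unfolding K_def by (simp add: algebra_simps)
      then show ?thesis using lo_rel by linarith
    qed
    have sqc': "posd (monom 1 K * Pc\<^sup>2) \<and> degree (monom 1 K * Pc\<^sup>2) = K + 2 * degree Pc"
      using posd_sq IHc by blast
    have sqm': "posd (Pm\<^sup>2) \<and> degree (Pm\<^sup>2) = 2 * degree Pm"
      using posd_sq[of Pm 0] IHm m0 by simp
    have dR: "degree (monom 1 K * Pc\<^sup>2 + Pm\<^sup>2) = max (K + 2 * degree Pc) (2 * degree Pm)"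
      using posd_add(2)[of "monom 1 K * Pc\<^sup>2" "Pm\<^sup>2"] sqc' sqm' by auto
    have deg_rel: "degree Pn + degree Pa = max (K + 2 * degree Pc) (2 * degree Pm)"
      using degree_mult_eq[OF Pnz, of Pa] IHa rec dR by simp
    have cd1: "c + d \<ge> 1" using D by linarith
    have ab1: "a + b \<ge> 1" using D(1) mf00 by (cases "a + b = 0") auto
    have deg_n: "degree Pn = (p + q - 1) * max X Y"
    proof -
      have "max (a * X + b * Y + 2 * ((c + d - 1) * max X Y)) (2 * ((a + c + (b + d) - 1) * max X Y)) =
          (a + 2 * c + (b + 2 * d) - 1) * max X Y + (a + b - 1) * max X Y"
        by (rule deg_arith[OF cd1 ab1])
      then show ?thesis using deg_rel IHa IHc IHm D(5,6) unfolding K_def by simp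
    qed
    show ?thesis using Pnz lo_n deg_n D(5,6) unfolding Pn_def by simp
  next
    case False
    then have "q = 0 \<or> q = 1" by linarith
    then show ?thesis
    proof
      assume q0: "q = 0"
      then have p1: "p = 1" using less.prems by (simp add: markov_frac_def)
      have "img (p + q - 1) A X Y = 1"
        by (rule img_base_one) (use less.prems p1 q0 markov_10 in auto)
      moreover have "lo 1 = 0" by (rule lo_eqI) auto
      ultimately show ?thesis using p1 q0 by simp
    next
      assume q1: "q = 1"
      then have "p = 0 \<or> p = 1" using less.prems by (auto simp: markov_frac_def)
      then show ?thesis
      proof
        assume p0: "p = 0"
        have "img (p + q - 1) A X Y = 1"
          by (rule img_base_one) (use less.prems p0 q1 markov_01 in auto)
        moreover have "lo 1 = 0" by (rule lo_eqI) auto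
        ultimately show ?thesis using p0 q1 by simp
      next
        assume p1: "p = 1"
        have e: "img (p + q - 1) A X Y = monom 1 X + monom 1 Y"
          using img_base_11[of A X Y] less.prems p1 q1 by simp
        have "posl (monom 1 X + monom 1 Y)" "lo (monom (1::real) X + monom 1 Y) = min X Y"
          using posl_add[of "monom 1 X" "monom 1 Y"] posl_monom by auto
        moreover have "degree (monom (1::real) X + monom 1 Y) = max X Y"
          using posd_add[of "monom 1 X" "monom 1 Y"] posd_monom by auto
        ultimately show ?thesis using e p1 q1 unfolding posl_def by simp
      qed
    qed
  qed
qed

lemma coeff_img_ne0:
  assumes "coeff (img n A X Y) k \<noteq> 0"
  shows "\<exists>i j. i + j \<le> n \<and> X * i + Y * j = k \<and> A i j \<noteq> 0"
proof (rule ccontr)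
  assume H: "\<not> ?thesis"
  have "coeff (img n A X Y) k = 0" unfolding coeff_img
    by (rule sum.neutral) (use H in \<open>auto simp: TT_def\<close>)
  then show False using assms by simp
qed

lemma modlem:
  fixes N s s' i i' :: nat
  assumes "i < N" "i' < N" "N * s + i = N * s' + i'"
  shows "i = i' \<and> s = s'"
proof -
  have "(N * s + i) mod N = i" "(N * s' + i') mod N = i'" using assms(1,2) by simp_all
  then have ii: "i = i'" using assms(3) by metis
  then have "N * s = N * s'" using assms(3) by simp
  then have "s = s'" using assms(1) by simp
  then show ?thesis using ii by simp
qed

lemma coeff_img_single:
  assumes ij: "i0 + j0 \<le> n" and inj: "\<And>i j. i + j \<le> n \<Longrightarrow> X * i + Y * j = X * i0 + Y * j0 \<Longrightarrow> i = i0 \<and> j = j0"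
  shows "coeff (img n A X Y) (X * i0 + Y * j0) = of_int (A i0 j0)"
proof -
  let ?f = "\<lambda>(i, j). if X * i + Y * j = X * i0 + Y * j0 then (of_int (A i j) :: real) else 0"
  have mem: "(i0, j0) \<in> TT n" using ij unfolding TT_def by simp
  have "coeff (img n A X Y) (X * i0 + Y * j0) = sum ?f (TT n)" unfolding coeff_img ..
  also have "\<dots> = ?f (i0, j0) + sum ?f (TT n - {(i0, j0)})" by (rule sum.remove[OF finite_TT mem])
  also have "sum ?f (TT n - {(i0, j0)}) = 0"
  proof (rule sum.neutral, rule ballI)
    fix p assume p: "p \<in> TT n - {(i0, j0)}"
    obtain i j where pe: "p = (i, j)" by (cases p)
    have "i + j \<le> n" "(i, j) \<noteq> (i0, j0)" using p pe unfolding TT_def by auto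
    then have "X * i + Y * j \<noteq> X * i0 + Y * j0" using inj by blast
    then show "?f p = 0" using pe by simp
  qed
  finally show ?thesis by simp
qed

lemma extract_facts:
  assumes a1: "1 \<le> a" and ab: "a \<le> b" and cop: "coprime a b" and M: "markov_numerator_coeffs a b A"
  shows "\<forall>i j. A i j \<noteq> 0 \<longrightarrow> a * b \<le> b * i + a * j"
    "A 0 b \<noteq> 0" "A a 0 \<noteq> 0" "A (a + b - 1) 0 \<noteq> 0" "A 0 (a + b - 1) \<noteq> 0"
proof -
  have mf: "markov_frac a b" using ab cop by (simp add: markov_frac_def)
  have b1: "1 \<le> b" using a1 ab by linarith
  have g: "G a b A" by (rule G_of_mnc[OF a1 b1 M])
  have sup: "\<And>i j. A i j \<noteq> 0 \<Longrightarrow> i + j \<le> a + b - 1" using M unfolding markov_numerator_coeffs_def by blast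
  define n where "n = a + b - 1"
  define N where "N = n + 1"
  have Nn: "n < N" and N0: "N > 0" unfolding N_def by auto
  note C = claimC[OF mf g]
  have C1: "img n A (N * b + 1) (N * a) \<noteq> 0 \<and> lo (img n A (N * b + 1) (N * a)) = N * a * b"
  proof -
    have "min (a * (N * b + 1)) (b * (N * a)) = N * a * b" using a1 by (simp add: min_def algebra_simps)
    then show ?thesis using C[of "N * b + 1" "N * a"] unfolding n_def by simp
  qed
  have val1: "(N * b + 1) * i + N * a * j = N * (b * i + a * j) + i" for i j
    by (simp add: algebra_simps)
  show "\<forall>i j. A i j \<noteq> 0 \<longrightarrow> a * b \<le> b * i + a * j"
  proof (intro allI impI)
    fix i0 j0 assume A0: "A i0 j0 \<noteq> 0"
    have ij0: "i0 + j0 \<le> n" using sup[OF A0] unfolding n_def .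
    have inj: "i = i0 \<and> j = j0" if "i + j \<le> n" "(N * b + 1) * i + N * a * j = (N * b + 1) * i0 + N * a * j0" for i j
    proof -
      have "i = i0 \<and> b * i + a * j = b * i0 + a * j0"
        using modlem[of i N i0 "b * i + a * j" "b * i0 + a * j0"] that Nn ij0 unfolding val1 by (simp add: ac_simps)
      then show ?thesis using a1 by auto
    qed
    have "coeff (img n A (N * b + 1) (N * a)) ((N * b + 1) * i0 + N * a * j0) = of_int (A i0 j0)"
      by (rule coeff_img_single[OF ij0 inj])
    then have "coeff (img n A (N * b + 1) (N * a)) ((N * b + 1) * i0 + N * a * j0) \<noteq> 0" using A0 by simp
    then have "\<not> (N * b + 1) * i0 + N * a * j0 < lo (img n A (N * b + 1) (N * a))"
      using lo_less by blast
    then have "\<not> (N * b + 1) * i0 + N * a * j0 < N * a * b" using C1 by simp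
    then have h: "N * a * b \<le> N * (b * i0 + a * j0) + i0" unfolding val1 by simp
    show "a * b \<le> b * i0 + a * j0"
    proof (rule ccontr)
      assume "\<not> a * b \<le> b * i0 + a * j0"
      then have "b * i0 + a * j0 + 1 \<le> a * b" by simp
      then have "N * (b * i0 + a * j0 + 1) \<le> N * (a * b)" by (rule mult_le_mono2)
      then have h2: "N * (b * i0 + a * j0) + N \<le> N * (a * b)" by (simp add: distrib_left)
      have h3: "N * (a * b) \<le> N * (b * i0 + a * j0) + i0" using h by (simp add: mult.assoc)
      have "i0 < N" using ij0 Nn by linarith
      then show False using h2 h3 by linarith
    qed
  qed
  show "A 0 b \<noteq> 0"
  proof -
    have "coeff (img n A (N * b + 1) (N * a)) (lo (img n A (N * b + 1) (N * a))) \<noteq> 0" using C1 by (intro lo_coeff) blast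
    then have "coeff (img n A (N * b + 1) (N * a)) (N * a * b) \<noteq> 0" using C1 by simp
    then obtain i j where ij: "i + j \<le> n" "(N * b + 1) * i + N * a * j = N * a * b" "A i j \<noteq> 0"
      using coeff_img_ne0 by blast
    have "N * (b * i + a * j) + i = N * (a * b) + 0" using ij(2) unfolding val1 by (simp add: ac_simps)
    have "i = 0 \<and> b * i + a * j = a * b" by (rule modlem[of i N 0 "b * i + a * j" "a * b"]) (use ij(1) Nn N0 \<open>N * (b * i + a * j) + i = N * (a * b) + 0\<close> in linarith)+
    then have "i = 0" "j = b" using a1 by auto
    then show ?thesis using ij(3) by simp
  qed
  have C2: "img n A (N * b) (N * a + 1) \<noteq> 0 \<and> lo (img n A (N * b) (N * a + 1)) = N * a * b"
  proof -
    have "min (a * (N * b)) (b * (N * a + 1)) = N * a * b" using b1 by (simp add: min_def algebra_simps)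
    then show ?thesis using C[of "N * b" "N * a + 1"] unfolding n_def by simp
  qed
  show "A a 0 \<noteq> 0"
  proof -
    have "coeff (img n A (N * b) (N * a + 1)) (lo (img n A (N * b) (N * a + 1))) \<noteq> 0" using C2 by (intro lo_coeff) blast
    then have "coeff (img n A (N * b) (N * a + 1)) (N * a * b) \<noteq> 0" using C2 by simp
    then obtain i j where ij: "i + j \<le> n" "N * b * i + (N * a + 1) * j = N * a * b" "A i j \<noteq> 0"
      using coeff_img_ne0 by blast
    have "N * (b * i + a * j) + j = N * (a * b) + 0" using ij(2) by (simp add: algebra_simps)
    have "j = 0 \<and> b * i + a * j = a * b" by (rule modlem[of j N 0 "b * i + a * j" "a * b"]) (use ij(1) Nn N0 \<open>N * (b * i + a * j) + j = N * (a * b) + 0\<close> in linarith)+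
    then have "j = 0" "i = a" using b1 by auto
    then show ?thesis using ij(3) by simp
  qed
  have C3: "img n A N 1 \<noteq> 0 \<and> degree (img n A N 1) = n * N"
  proof -
    have "max N 1 = N" using N0 by simp
    then show ?thesis using C[of N 1] unfolding n_def by simp
  qed
  show "A (a + b - 1) 0 \<noteq> 0"
  proof -
    have "coeff (img n A N 1) (degree (img n A N 1)) \<noteq> 0" by (rule leading_coeff_neq_0) (use C3 in blast)
    then have "coeff (img n A N 1) (n * N) \<noteq> 0" using C3 by (metis (no_types))
    then obtain i j where ij: "i + j \<le> n" "N * i + 1 * j = n * N" "A i j \<noteq> 0"
      using coeff_img_ne0 by blast
    have e: "N * i + j = N * n + 0" using ij(2) by (simp add: ac_simps)
    have "j = 0 \<and> i = n" by (rule modlem[of j N 0 i n]) (use ij(1) Nn N0 e in linarith)+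
    then show ?thesis using ij(3) unfolding n_def by simp
  qed
  have C4: "img n A 1 N \<noteq> 0 \<and> degree (img n A 1 N) = n * N"
  proof -
    have "max 1 N = N" using N0 by simp
    then show ?thesis using C[of 1 N] unfolding n_def by simp
  qed
  show "A 0 (a + b - 1) \<noteq> 0"
  proof -
    have "coeff (img n A 1 N) (degree (img n A 1 N)) \<noteq> 0" by (rule leading_coeff_neq_0) (use C4 in blast)
    then have "coeff (img n A 1 N) (n * N) \<noteq> 0" using C4 by (metis (no_types))
    then obtain i j where ij: "i + j \<le> n" "1 * i + N * j = n * N" "A i j \<noteq> 0"
      using coeff_img_ne0 by blast
    have e: "N * j + i = N * n + 0" using ij(2) by (simp add: ac_simps)
    have "i = 0 \<and> j = n" by (rule modlem[of i N 0 j n]) (use ij(1) Nn N0 e in linarith)+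
    then show ?thesis using ij(3) unfolding n_def by simp
  qed
qed

lemma conv_pt:
  fixes x1 y1 x2 y2 t :: real
  assumes "convex C" "(x1, y1) \<in> C" "(x2, y2) \<in> C" "0 \<le> t" "t \<le> 1"
  shows "((1 - t) * x1 + t * x2, (1 - t) * y1 + t * y2) \<in> C"
  using convexD_alt[OF assms] by simp

lemma hseg:
  fixes x1 x2 x y :: real
  assumes C: "convex C" and p: "(x1, y) \<in> C" and q: "(x2, y) \<in> C" and le: "x1 \<le> x" "x \<le> x2"
  shows "(x, y) \<in> C"
proof (cases "x1 = x2")
  case True then have "x = x1" using le by simp
  then show ?thesis using p by simp
next
  case False
  then have d: "x2 - x1 > 0" using le by simp
  define t where "t = (x - x1) / (x2 - x1)"
  have t: "0 \<le> t" "t \<le> 1" unfolding t_def using le d by (auto simp: divide_le_eq_1)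
  have "((1 - t) * x1 + t * x2, (1 - t) * y + t * y) \<in> C" by (rule conv_pt[OF C p q t])
  moreover have "(1 - t) * x1 + t * x2 = x"
  proof -
    have "t * (x2 - x1) = x - x1" unfolding t_def using d by simp
    moreover have "(1 - t) * x1 + t * x2 = x1 + t * (x2 - x1)" by (simp add: algebra_simps)
    ultimately show ?thesis by simp
  qed
  moreover have "(1 - t) * y + t * y = y" by (simp add: algebra_simps)
  ultimately show ?thesis by simp
qed

lemma vseg:
  fixes y1 y2 x y :: real
  assumes C: "convex C" and p: "(x, y1) \<in> C" and q: "(x, y2) \<in> C" and le: "y1 \<le> y" "y \<le> y2"
  shows "(x, y) \<in> C"
proof (cases "y1 = y2")
  case True then have "y = y1" using le by simp
  then show ?thesis using p by simp
next
  case False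
  then have d: "y2 - y1 > 0" using le by simp
  define t where "t = (y - y1) / (y2 - y1)"
  have t: "0 \<le> t" "t \<le> 1" unfolding t_def using le d by (auto simp: divide_le_eq_1)
  have "((1 - t) * x + t * x, (1 - t) * y1 + t * y2) \<in> C" by (rule conv_pt[OF C p q t])
  moreover have "(1 - t) * y1 + t * y2 = y"
  proof -
    have "t * (y2 - y1) = y - y1" unfolding t_def using d by simp
    moreover have "(1 - t) * y1 + t * y2 = y1 + t * (y2 - y1)" by (simp add: algebra_simps)
    ultimately show ?thesis by simp
  qed
  moreover have "(1 - t) * x + t * x = x" by (simp add: algebra_simps)
  ultimately show ?thesis by simp
qed

lemma polygon_eq:
  fixes a b :: nat and A :: "nat \<Rightarrow> nat \<Rightarrow> int"
  assumes a1: "1 \<le> a" and ab: "a \<le> b"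
    and F: "\<forall>i j. A i j \<noteq> 0 \<longrightarrow> a * b \<le> b * i + a * j"
    and sup: "\<forall>i j. A i j \<noteq> 0 \<longrightarrow> i + j \<le> a + b - 1"
    and V: "A 0 b \<noteq> 0" "A a 0 \<noteq> 0" "A (a + b - 1) 0 \<noteq> 0" "A 0 (a + b - 1) \<noteq> 0"
  shows "newton_polygon A =
    {(i :: real, j :: real). i \<ge> 0 \<and> j \<ge> 0 \<and> i / real a + j / real b \<ge> 1 \<and> i + j \<le> real a + real b - 1}"
    (is "_ = ?Q")
proof -
  define S where "S = {(real i, real j) | i j. A i j \<noteq> 0}"
  have np: "newton_polygon A = convex hull S" unfolding newton_polygon_def S_def ..
  have ra: "real a > 0" "real b > 0" using a1 ab by auto
  have rn: "real (a + b - 1) = real a + real b - 1" using a1 by (simp add: of_nat_diff)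
  have SQ: "S \<subseteq> ?Q"
  proof
    fix p assume "p \<in> S"
    then obtain i j where p: "p = (real i, real j)" and Aij: "A i j \<noteq> 0" unfolding S_def by blast
    have h1: "a * b \<le> b * i + a * j" using F Aij by blast
    have h2: "i + j \<le> a + b - 1" using sup Aij by blast
    have "real a * real b \<le> real b * real i + real a * real j"
      using h1 by (metis of_nat_add of_nat_le_iff of_nat_mult)
    then have "1 \<le> real i / real a + real j / real b" using ra by (simp add: field_simps)
    moreover have "real i + real j \<le> real a + real b - 1"
      using h2 rn by (metis of_nat_add of_nat_le_iff)
    ultimately show "p \<in> ?Q" unfolding p by simp
  qed
  have cQ: "convex ?Q"
  proof (rule convexI)
    fix p q :: "real \<times> real" and u v :: real
    assume pQ: "p \<in> ?Q" and qQ: "q \<in> ?Q" and u: "0 \<le> u" and v: "0 \<le> v" and uv: "u + v = 1"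
    obtain x1 y1 where p: "p = (x1, y1)" by (cases p)
    obtain x2 y2 where q: "q = (x2, y2)" by (cases q)
    have P: "x1 \<ge> 0" "y1 \<ge> 0" "x1 / real a + y1 / real b \<ge> 1" "x1 + y1 \<le> real a + real b - 1"
      using pQ p by auto
    have Q: "x2 \<ge> 0" "y2 \<ge> 0" "x2 / real a + y2 / real b \<ge> 1" "x2 + y2 \<le> real a + real b - 1"
      using qQ q by auto
    have e: "u *\<^sub>R p + v *\<^sub>R q = (u * x1 + v * x2, u * y1 + v * y2)" unfolding p q by simp
    have c1: "u * x1 + v * x2 \<ge> 0" "u * y1 + v * y2 \<ge> 0" using P Q u v by auto
    have "(u * x1 + v * x2) / real a + (u * y1 + v * y2) / real b =
        u * (x1 / real a + y1 / real b) + v * (x2 / real a + y2 / real b)"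
      by (simp add: add_divide_distrib distrib_left)
    moreover have "u * (x1 / real a + y1 / real b) \<ge> u * 1" using P(3) u by (rule mult_left_mono)
    moreover have "v * (x2 / real a + y2 / real b) \<ge> v * 1" using Q(3) v by (rule mult_left_mono)
    ultimately have c2: "(u * x1 + v * x2) / real a + (u * y1 + v * y2) / real b \<ge> 1" using uv by linarith
    have "u * (x1 + y1) \<le> u * (real a + real b - 1)" using P(4) u by (rule mult_left_mono)
    moreover have "v * (x2 + y2) \<le> v * (real a + real b - 1)" using Q(4) v by (rule mult_left_mono)
    ultimately have "u * x1 + v * x2 + (u * y1 + v * y2) \<le> (u + v) * (real a + real b - 1)"
      by (simp add: algebra_simps)
    then have c3: "u * x1 + v * x2 + (u * y1 + v * y2) \<le> real a + real b - 1" using uv by simp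
    show "u *\<^sub>R p + v *\<^sub>R q \<in> ?Q" unfolding e using c1 c2 c3 by simp
  qed
  have sub1: "convex hull S \<subseteq> ?Q" by (rule hull_minimal[where S=convex, OF SQ cQ])
  define C where "C = convex hull S"
  have cC: "convex C" unfolding C_def by simp
  define r where "r = real a + real b - 1"
  have rpos: "r \<ge> real b" "r \<ge> real a" unfolding r_def using a1 ab by auto
  have V1: "(real a, 0) \<in> C" unfolding C_def S_def using V(2) by (intro hull_inc) force
  have V4: "(0, real b) \<in> C" unfolding C_def S_def using V(1) by (intro hull_inc) force
  have V2: "(r, 0) \<in> C" unfolding C_def S_def r_def using V(3) rn by (intro hull_inc) (metis (mono_tags, lifting) mem_Collect_eq of_nat_0)
  have V3: "(0, r) \<in> C" unfolding C_def S_def r_def using V(4) rn by (intro hull_inc) (metis (mono_tags, lifting) mem_Collect_eq of_nat_0)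
  have sub2: "?Q \<subseteq> C"
  proof
    fix p assume pQ: "p \<in> ?Q"
    obtain x y where p: "p = (x, y)" by (cases p)
    have P: "x \<ge> 0" "y \<ge> 0" "x / real a + y / real b \<ge> 1" "x + y \<le> r"
      using pQ p unfolding r_def by auto
    have R: "(r - y, y) \<in> C"
    proof -
      define t where "t = y / r"
      have rp: "r > 0" using rpos ra by linarith
      have t: "0 \<le> t" "t \<le> 1" unfolding t_def using P rp by auto
      have "((1 - t) * r + t * 0, (1 - t) * 0 + t * r) \<in> C" by (rule conv_pt[OF cC V2 V3 t])
      moreover have "(1 - t) * r + t * 0 = r - y" "(1 - t) * 0 + t * r = y"
        unfolding t_def using rp by (simp_all add: field_simps)
      ultimately show ?thesis by simp
    qed
    show "p \<in> C"
    proof (cases "y \<le> real b")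
      case True
      define t where "t = y / real b"
      have t: "0 \<le> t" "t \<le> 1" unfolding t_def using P True ra by auto
      have "((1 - t) * real a + t * 0, (1 - t) * 0 + t * real b) \<in> C" by (rule conv_pt[OF cC V1 V4 t])
      moreover have "(1 - t) * 0 + t * real b = y" unfolding t_def using ra by simp
      ultimately have L: "((1 - t) * real a, y) \<in> C" by simp
      have "(1 - t) * real a \<le> x"
      proof -
        have "1 - y / real b \<le> x / real a" using P(3) by simp
        then have "(1 - y / real b) * real a \<le> x" using ra by (simp add: field_simps)
        then show ?thesis unfolding t_def by (simp add: mult.commute)
      qed
      moreover have "x \<le> r - y" using P by simp
      ultimately show ?thesis unfolding p by (rule hseg[OF cC L R])
    next
      case False
      have "(0, y) \<in> C" by (rule vseg[OF cC V4 V3]) (use False P in auto)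
      moreover have "0 \<le> x" "x \<le> r - y" using P by auto
      ultimately show ?thesis unfolding p using hseg[OF cC _ R] by blast
    qed
  qed
  show ?thesis unfolding np using sub1 sub2 unfolding C_def by blast
qed

theorem theorem3p2:
  fixes a b :: nat
  assumes "1 \<le> a" and "a \<le> b" and "coprime a b"
  shows "(\<exists>A. markov_numerator_coeffs a b A) \<and>
         (\<forall>A. markov_numerator_coeffs a b A \<longrightarrow>
            newton_polygon A =
              {(i :: real, j :: real). i \<ge> 0 \<and> j \<ge> 0 \<and> i / real a + j / real b \<ge> 1
                 \<and> i + j \<le> real a + real b - 1})"
proof (intro conjI allI impI)
  show "\<exists>A. markov_numerator_coeffs a b A" by (rule exists_mnc[OF assms])
next
  fix A assume M: "markov_numerator_coeffs a b A"
  note E = extract_facts[OF assms M]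
  have sup: "\<forall>i j. A i j \<noteq> 0 \<longrightarrow> i + j \<le> a + b - 1" using M unfolding markov_numerator_coeffs_def by blast
  show "newton_polygon A = {(i :: real, j :: real). i \<ge> 0 \<and> j \<ge> 0 \<and> i / real a + j / real b \<ge> 1
                 \<and> i + j \<le> real a + real b - 1}"
    by (rule polygon_eq[OF assms(1,2) E(1) sup E(2-5)])
qed


end
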